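(* Let $d\ge 2$ and let $(C_1,\dots,C_R)$ be a solution of period $R$ to the board game on the $d \times d$ lattice (as defined in the context). Then there exists a periodic measurement schedule of the Bacon-Shor check operators on the $d\times d$ lattice with period $R$ whose steady-state sequence of instantaneous stabilizer groups corresponds to the coloring sequence $(C_1,\dots,C_R)$ (i.e., in the steady-state round corresponding to $C_j$, the instantaneous stabilizer group contains, up to sign, $\overline{X}_b$ for every red box $b$ of $C_j$ and $\overline{Z}_b$ for every blue box $b$ of $C_j$), and which produces detectors of weight $O(Rd)$.
   Context: The Bacon-Shor code on a $d\times d$ square lattice has one qubit at each vertex $(i,j)$ (row $i$, column $j$, $0\le i,j\le d-1$); its checks are $X_{i,j}X_{i,j+1}$ on horizontal edges and $Z_{i,j}Z_{i+1,j}$ on vertical edges. The $(d-1)^2$ unit squares (plaquettes) of the lattice are called boxes; each box corresponds to a gauge qubit. For the box $b$ between qubit rows $r,r+1$ and qubit columns $c,c+1$, define $\overline{X}_b=\prod_{k\ge r+1} X_{k,c}X_{k,c+1}$ (the product of all $XX$ checks in that plaquette column lying above the box) and $\overline{Z}_b=\prod_{k\ge c+1} Z_{r,k}Z_{r+1,k}$ (the product of all $ZZ$ checks in that plaquette row lying to the right of the box). A coloring assigns each box the color red or blue; red means $\overline{X}_b$ is fixed (an element, up to sign, of the instantaneous stabilizer group, i.e. the stabilizer group of the state after the current round of measurements) and blue means $\overline{Z}_b$ is fixed. A vertical (horizontal) strip is a set of consecutive boxes in one column (row). Allowed moves: coloring $C_{j+1}$ follows $C_j$ if it is obtained from $C_j$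 by, for some red boxes of $C_j$, coloring red a vertical strip in that box's column containing the box, and, for some blue boxes of $C_j$, coloring blue a horizontal strip in that box's row containing the box, all other boxes keeping their colors. A solution of period $R$ to the board game is a sequence of colorings $(C_1,\dots,C_R)$ such that $C_{j+1}$ follows $C_j$ for $1\le j<R$ and $C_1$ follows $C_R$, and such that (a) for each column of boxes there is some $C_j$ in which that column is entirely red, and for each row of boxes there is some $C_j$ in which that row is entirely blue; (b) in every $C_j$, each column contains at least one red box and each row contains at least one blue box. A detector is a product $D$ of measurement outcomes from rounds $r_1<\dots<r_K$ such that each partial Pauli product over rounds $r_1,\dots,r_J$ ($J<K$) commutes with every check measured in rounds $r_J+1,\dots,r_{J+1}$, and the full product of the measured Pauli operators is proportional to the identity. Its weight is the sum of the weights (number of qubits acted on nontrivially) of all the measured Pauli operators appearing in it. *)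

theory Defs
  imports Main
begin

text \<open>Qubits are lattice vertices (i,j) = (row, column). A Pauli operator up to
phase is represented by its X-support and Z-support (a Y on a qubit means the
qubit is in both).\<close>

type_synonym qubit = "nat \<times> nat"
type_synonym pauli = "qubit set \<times> qubit set"

definition symd :: "'a set \<Rightarrow> 'a set \<Rightarrow> 'a set" where
  "symd A B = (A - B) \<union> (B - A)"

definition pmul :: "pauli \<Rightarrow> pauli \<Rightarrow> pauli" where
  "pmul p q = (symd (fst p) (fst q), symd (snd p) (snd q))"

definition pid :: pauli where
  "pid = ({}, {})"

definition commute :: "pauli \<Rightarrow> pauli \<Rightarrow> bool" where
  "commute p q \<longleftrightarrow> even (card (fst p \<inter> snd q) + card (snd p \<inter> fst q))"

definition pweight :: "pauli \<Rightarrow> nat" where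
  "pweight p = card (fst p \<union> snd p)"

inductive_set pgen :: "pauli set \<Rightarrow> pauli set" for M where
  pgen_id: "pid \<in> pgen M"
| pgen_mul: "p \<in> M \<Longrightarrow> q \<in> pgen M \<Longrightarrow> pmul p q \<in> pgen M"

definition XX :: "nat \<Rightarrow> nat \<Rightarrow> pauli" where
  "XX i j = ({(i, j), (i, Suc j)}, {})"

definition ZZ :: "nat \<Rightarrow> nat \<Rightarrow> pauli" where
  "ZZ i j = ({}, {(i, j), (Suc i, j)})"

definition bs_checks :: "nat \<Rightarrow> pauli set" where
  "bs_checks d = {XX i j | i j. i < d \<and> Suc j < d} \<union> {ZZ i j | i j. Suc i < d \<and> j < d}"

text \<open>Box (r,c): plaquette between qubit rows r,r+1 and qubit columns c,c+1.\<close>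
definition boxes :: "nat \<Rightarrow> (nat \<times> nat) set" where
  "boxes d = {0..<d-1} \<times> {0..<d-1}"

definition Xbar :: "nat \<Rightarrow> nat \<times> nat \<Rightarrow> pauli" where
  "Xbar d b = ({(k, snd b) | k. fst b + 1 \<le> k \<and> k < d} \<union> {(k, Suc (snd b)) | k. fst b + 1 \<le> k \<and> k < d}, {})"

definition Zbar :: "nat \<Rightarrow> nat \<times> nat \<Rightarrow> pauli" where
  "Zbar d b = ({}, {(fst b, k) | k. snd b + 1 \<le> k \<and> k < d} \<union> {(Suc (fst b), k) | k. snd b + 1 \<le> k \<and> k < d})"

text \<open>A coloring: True = red, False = blue (only values on boxes matter).\<close>
type_synonym coloring = "nat \<times> nat \<Rightarrow> bool"

definition red_strip :: "nat \<Rightarrow> coloring \<Rightarrow> (nat \<times> nat) set \<Rightarrow> bool" where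
  "red_strip d C S \<longleftrightarrow> (\<exists>c a b r. a \<le> r \<and> r \<le> b \<and> b < d - 1 \<and> c < d - 1 \<and> C (r, c)
      \<and> S = {(k, c) | k. a \<le> k \<and> k \<le> b})"

definition blue_strip :: "nat \<Rightarrow> coloring \<Rightarrow> (nat \<times> nat) set \<Rightarrow> bool" where
  "blue_strip d C S \<longleftrightarrow> (\<exists>r a b c. a \<le> c \<and> c \<le> b \<and> b < d - 1 \<and> r < d - 1 \<and> \<not> C (r, c)
      \<and> S = {(r, k) | k. a \<le> k \<and> k \<le> b})"

definition follows :: "nat \<Rightarrow> coloring \<Rightarrow> coloring \<Rightarrow> bool" where
  "follows d C C' \<longleftrightarrow> (\<exists>Rs Bs. (\<forall>S\<in>Rs. red_strip d C S) \<and> (\<forall>S\<in>Bs. blue_strip d C S)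
      \<and> \<Union>Rs \<inter> \<Union>Bs = {}
      \<and> (\<forall>b\<in>boxes d. C' b = (if b \<in> \<Union>Rs then True else if b \<in> \<Union>Bs then False else C b)))"

text \<open>Solution of period R, colorings C 0, ..., C (R-1) (paper's C_1..C_R).\<close>
definition solution :: "nat \<Rightarrow> nat \<Rightarrow> (nat \<Rightarrow> coloring) \<Rightarrow> bool" where
  "solution d R C \<longleftrightarrow> 0 < R
     \<and> (\<forall>j. Suc j < R \<longrightarrow> follows d (C j) (C (Suc j)))
     \<and> follows d (C (R - 1)) (C 0)
     \<and> (\<forall>c < d - 1. \<exists>j < R. \<forall>r < d - 1. C j (r, c))
     \<and> (\<forall>r < d - 1. \<exists>j < R. \<forall>c < d - 1. \<not> C j (r, c))
     \<and> (\<forall>j < R. (\<forall>c < d - 1. \<exists>r < d - 1. C j (r, c)) \<and> (\<forall>r < d - 1. \<exists>c < d - 1. \<not> C j (r, c)))"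

definition schedule :: "nat \<Rightarrow> nat \<Rightarrow> (nat \<Rightarrow> pauli set) \<Rightarrow> bool" where
  "schedule d R M \<longleftrightarrow> (\<forall>t. M t \<subseteq> bs_checks d \<and> (\<forall>p\<in>M t. \<forall>q\<in>M t. commute p q)
      \<and> M (t + R) = M t)"

definition meas_update :: "pauli set \<Rightarrow> pauli set \<Rightarrow> pauli set" where
  "meas_update S Ms = pgen ({s \<in> S. \<forall>m\<in>Ms. commute s m} \<union> Ms)"

text \<open>isg M t: instantaneous stabilizer group (up to sign) after the first t rounds,
starting from the maximally mixed state (trivial group).\<close>
fun isg :: "(nat \<Rightarrow> pauli set) \<Rightarrow> nat \<Rightarrow> pauli set" where
  "isg M 0 = {pid}"
| "isg M (Suc t) = meas_update (isg M t) (M t)"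

text \<open>A measurement event is a pair (round, measured check).\<close>
type_synonym event = "nat \<times> pauli"

definition eprod :: "event set \<Rightarrow> pauli" where
  "eprod E = ({q. odd (card {e\<in>E. q \<in> fst (snd e)})}, {q. odd (card {e\<in>E. q \<in> snd (snd e)})})"

definition detector :: "(nat \<Rightarrow> pauli set) \<Rightarrow> event set \<Rightarrow> bool" where
  "detector M D \<longleftrightarrow> finite D \<and> D \<noteq> {} \<and> (\<forall>(t, p)\<in>D. p \<in> M t)
     \<and> (\<forall>t \<in> fst ` D. \<forall>t'. t < t' \<and> (\<forall>s\<in>fst ` D. t < s \<longrightarrow> t' \<le> s) \<and> (\<exists>s\<in>fst ` D. t < s)
            \<longrightarrow> (\<forall>q\<in>M t'. commute (eprod {e\<in>D. fst e \<le> t}) q))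
     \<and> eprod D = pid"

definition det_weight :: "event set \<Rightarrow> nat" where
  "det_weight D = (\<Sum>e\<in>D. pweight (snd e))"

definition symd_family :: "event set set \<Rightarrow> event set" where
  "symd_family F = {e. odd (card {D\<in>F. e \<in> D})}"

end

theory Submission
  imports Defs
begin

lemma symd_iff[simp]: "x \<in> symd A B \<longleftrightarrow> (x \<in> A) \<noteq> (x \<in> B)"
  by (auto simp: symd_def)

lemma pmul_assoc: "pmul (pmul p q) r = pmul p (pmul q r)"
  by (auto simp: pmul_def prod_eq_iff)

lemma pmul_comm: "pmul p q = pmul q p"
  by (auto simp: pmul_def prod_eq_iff)

lemma pmul_pid[simp]: "pmul pid p = p" "pmul p pid = p"
  by (auto simp: pmul_def pid_def prod_eq_iff)

lemma pmul_self[simp]: "pmul p p = pid"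
  by (auto simp: pmul_def pid_def prod_eq_iff)

lemma pmul_cancel: "pmul p (pmul p q) = q"
  by (simp add: pmul_assoc[symmetric])

lemma pgen_mul_closed: "p \<in> pgen M \<Longrightarrow> q \<in> pgen M \<Longrightarrow> pmul p q \<in> pgen M"
proof (induction p rule: pgen.induct)
  case pgen_id then show ?case by simp
next
  case (pgen_mul p r) then show ?case by (simp add: pmul_assoc pgen.pgen_mul)
qed

lemma pgen_base: "p \<in> M \<Longrightarrow> p \<in> pgen M"
  using pgen.pgen_mul[OF _ pgen.pgen_id, of p M] by simp

lemma pgen_mono: "M \<subseteq> N \<Longrightarrow> pgen M \<subseteq> pgen N"
proof
  fix x assume mn: "M \<subseteq> N" and "x \<in> pgen M"
  from this(2) show "x \<in> pgen N"
    by (induction x rule: pgen.induct) (use mn in \<open>auto intro: pgen.intros\<close>)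
qed

lemma pgen_subset: "pid \<in> U \<Longrightarrow> (\<And>p q. p \<in> U \<Longrightarrow> q \<in> U \<Longrightarrow> pmul p q \<in> U) \<Longrightarrow> M \<subseteq> U \<Longrightarrow> pgen M \<subseteq> U"
proof
  fix x assume a: "pid \<in> U" "\<And>p q. p \<in> U \<Longrightarrow> q \<in> U \<Longrightarrow> pmul p q \<in> U" "M \<subseteq> U" "x \<in> pgen M"
  from a(4) show "x \<in> U" by (induction x rule: pgen.induct) (use a in auto)
qed

lemma even_card_int2: "a \<noteq> b \<Longrightarrow> even (card (A \<inter> {a,b})) \<longleftrightarrow> (a \<in> A \<longleftrightarrow> b \<in> A)"
proof -
  assume ab: "a \<noteq> b"
  consider "a \<in> A" "b \<in> A" | "a \<in> A" "b \<notin> A" | "a \<notin> A" "b \<in> A" | "a \<notin> A" "b \<notin> A" by blast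
  then show ?thesis
  proof cases
    case 1 then have "A \<inter> {a,b} = {a,b}" by auto with ab 1 show ?thesis by simp
  next
    case 2 then have "A \<inter> {a,b} = {a}" by auto then show ?thesis using 2 by simp
  next
    case 3 then have "A \<inter> {a,b} = {b}" by auto then show ?thesis using 3 by simp
  next
    case 4 then have "A \<inter> {a,b} = {}" by auto then show ?thesis using 4 by simp
  qed
qed

lemma XX_inj[simp]: "XX k c = XX k' c' \<longleftrightarrow> k = k' \<and> c = c'"
  by (auto simp: XX_def doubleton_eq_iff)

lemma ZZ_inj[simp]: "ZZ k c = ZZ k' c' \<longleftrightarrow> k = k' \<and> c = c'"
  by (auto simp: ZZ_def doubleton_eq_iff)

lemma XX_ZZ_ne[simp]: "XX k c \<noteq> ZZ r j" "ZZ r j \<noteq> XX k c"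
  by (auto simp: XX_def ZZ_def)

lemma commute_XX_XX: "commute (XX k c) (XX k' c')"
  by (simp add: commute_def XX_def)

lemma commute_ZZ_ZZ: "commute (ZZ k c) (ZZ k' c')"
  by (simp add: commute_def ZZ_def)

lemma commute_XX_ZZ: "commute (XX k c) (ZZ r j) \<longleftrightarrow>
   (((r,j) = (k,c) \<or> (r,j) = (k, Suc c)) \<longleftrightarrow> ((Suc r,j) = (k,c) \<or> (Suc r,j) = (k, Suc c)))"
  unfolding commute_def XX_def ZZ_def by (simp add: even_card_int2)

lemma commute_sym: "commute p q \<longleftrightarrow> commute q p"
  by (simp add: commute_def Int_commute add.commute)

lemma commute_ZZ_XX: "commute (ZZ r j) (XX k c) \<longleftrightarrow> commute (XX k c) (ZZ r j)"
  by (rule commute_sym)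

definition sched :: "nat \<Rightarrow> nat \<Rightarrow> (nat \<Rightarrow> coloring) \<Rightarrow> nat \<Rightarrow> pauli set" where
  "sched d R C t = {XX k c | k c. k < d \<and> c < d - 1 \<and> (0 < k \<longrightarrow> C (t mod R) (k - 1, c))
        \<and> (k < d - 1 \<longrightarrow> C (t mod R) (k, c))}
   \<union> {ZZ r j | r j. r < d - 1 \<and> j < d \<and> (0 < j \<longrightarrow> \<not> C (t mod R) (r, j - 1))
        \<and> (j < d - 1 \<longrightarrow> \<not> C (t mod R) (r, j))}"

lemma XX_in_sched: "XX k c \<in> sched d R C t \<longleftrightarrow> k < d \<and> c < d - 1 \<and> (0 < k \<longrightarrow> C (t mod R) (k - 1, c))
        \<and> (k < d - 1 \<longrightarrow> C (t mod R) (k, c))"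
  unfolding sched_def by auto

lemma ZZ_in_sched: "ZZ r j \<in> sched d R C t \<longleftrightarrow> r < d - 1 \<and> j < d \<and> (0 < j \<longrightarrow> \<not> C (t mod R) (r, j - 1))
        \<and> (j < d - 1 \<longrightarrow> \<not> C (t mod R) (r, j))"
  unfolding sched_def by auto

lemma sched_cases:
  assumes "q \<in> sched d R C t"
  obtains k c where "q = XX k c" "XX k c \<in> sched d R C t" | r j where "q = ZZ r j" "ZZ r j \<in> sched d R C t"
proof -
  from assms have "(\<exists>k c. q = XX k c) \<or> (\<exists>r j. q = ZZ r j)" unfolding sched_def by blast
  then show ?thesis using assms that by blast
qed

lemma sched_commute:
  assumes "p \<in> sched d R C t" "q \<in> sched d R C t"
  shows "commute p q"
proof -
  have xz: "commute (XX k c) (ZZ r j)" if "XX k c \<in> sched d R C t" "ZZ r j \<in> sched d R C t" for k c r j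
  proof -
    have h1: "(r,j) \<noteq> (k,c)" using that by (auto simp: XX_in_sched ZZ_in_sched)
    have h2: "(r,j) \<noteq> (k,Suc c)" using that by (auto simp: XX_in_sched ZZ_in_sched)
    have h3: "(Suc r,j) \<noteq> (k,c)" using that by (auto simp: XX_in_sched ZZ_in_sched)
    have h4: "(Suc r,j) \<noteq> (k,Suc c)" using that by (auto simp: XX_in_sched ZZ_in_sched)
    show ?thesis unfolding commute_XX_ZZ using h1 h2 h3 h4 by blast
  qed
  show ?thesis
    using assms
    by (cases rule: sched_cases[OF assms(1)]; cases rule: sched_cases[OF assms(2)])
       (auto simp: commute_XX_XX commute_ZZ_ZZ commute_ZZ_XX xz)
qed

lemma sched_schedule: "schedule d R (sched d R C)"
  unfolding schedule_def
proof (intro allI conjI ballI)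
  fix t
  show "sched d R C t \<subseteq> bs_checks d"
    unfolding sched_def bs_checks_def by auto
  show "\<And>p q. p \<in> sched d R C t \<Longrightarrow> q \<in> sched d R C t \<Longrightarrow> commute p q"
    by (rule sched_commute)
  show "sched d R C (t + R) = sched d R C t"
    unfolding sched_def by simp
qed

definition grid :: "nat \<Rightarrow> qubit set" where "grid d = {0..<d} \<times> {0..<d}"
definition PU :: "nat \<Rightarrow> pauli set" where "PU d = Pow (grid d) \<times> Pow (grid d)"

lemma finite_PU: "finite (PU d)"
  unfolding PU_def grid_def by simp

lemma pid_PU: "pid \<in> PU d" by (simp add: PU_def pid_def)

lemma pmul_PU: "p \<in> PU d \<Longrightarrow> q \<in> PU d \<Longrightarrow> pmul p q \<in> PU d"
  by (auto simp: PU_def pmul_def symd_def)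

lemma bs_checks_PU: "bs_checks d \<subseteq> PU d"
  by (auto simp: bs_checks_def PU_def grid_def XX_def ZZ_def)

lemma pgen_PU: "M \<subseteq> PU d \<Longrightarrow> pgen M \<subseteq> PU d"
  by (rule pgen_subset[OF pid_PU pmul_PU])

lemma isg_PU: "schedule d R M \<Longrightarrow> isg M t \<subseteq> PU d"
proof (induction t)
  case 0 then show ?case by (simp add: pid_PU)
next
  case (Suc t)
  have "M t \<subseteq> PU d" using Suc.prems bs_checks_PU unfolding schedule_def by blast
  then have "{s \<in> isg M t. \<forall>m\<in>M t. commute s m} \<union> M t \<subseteq> PU d" using Suc by blast
  then show ?case unfolding isg.simps meas_update_def by (rule pgen_PU)
qed

lemma meas_update_mono: "S \<subseteq> S' \<Longrightarrow> meas_update S Ms \<subseteq> meas_update S' Ms"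
  unfolding meas_update_def by (rule pgen_mono) auto

lemma pid_isg: "pid \<in> isg M t"
  by (cases t) (auto simp: meas_update_def intro: pgen.intros)

lemma isg_mono_R: "schedule d R M \<Longrightarrow> isg M t \<subseteq> isg M (t + R)"
proof (induction t)
  case 0 then show ?case by (simp add: pid_isg)
next
  case (Suc t)
  have "M (t + R) = M t" using Suc.prems unfolding schedule_def by blast
  have "isg M (Suc t) = meas_update (isg M t) (M t)" by simp
  also have "\<dots> \<subseteq> meas_update (isg M (t + R)) (M t)" by (rule meas_update_mono[OF Suc.IH[OF Suc.prems]])
  also have "\<dots> = isg M (Suc t + R)" using \<open>M (t + R) = M t\<close> by simp
  finally show ?case .
qed

lemma isg_period_step: "schedule d R M \<Longrightarrow> isg M (t + R) = isg M t \<Longrightarrow> isg M (Suc t + R) = isg M (Suc t)"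
proof -
  assume s: "schedule d R M" and e: "isg M (t + R) = isg M t"
  have "M (t + R) = M t" using s unfolding schedule_def by blast
  then show ?thesis using e by simp
qed

lemma isg_eventually_periodic:
  assumes s: "schedule d R M"
  shows "\<exists>t0. \<forall>t\<ge>t0. isg M (t + R) = isg M t"
proof -
  define f where "f m = isg M (m * R)" for m
  have sub: "f m \<subseteq> f (Suc m)" for m
    using isg_mono_R[OF s, of "m * R"] by (simp add: f_def add.commute)
  have fin: "f m \<subseteq> PU d" for m using isg_PU[OF s] by (simp add: f_def)
  have "\<exists>m. f (Suc m) = f m"
  proof (rule ccontr)
    assume "\<not> ?thesis"
    then have ps: "f m \<subset> f (Suc m)" for m using sub by blast
    have "m \<le> card (f m)" for m
    proof (induction m)
      case 0 then show ?case by simp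
    next
      case (Suc m)
      have "card (f m) < card (f (Suc m))"
        by (rule psubset_card_mono[OF finite_subset[OF fin finite_PU] ps])
      then show ?case using Suc by simp
    qed
    moreover have "card (f m) \<le> card (PU d)" for m by (rule card_mono[OF finite_PU fin])
    ultimately have "Suc (card (PU d)) \<le> card (PU d)" using le_trans by blast
    then show False by simp
  qed
  then obtain m where m: "isg M (m * R + R) = isg M (m * R)" by (auto simp: f_def add.commute)
  have "isg M (m * R + n + R) = isg M (m * R + n)" for n
  proof (induction n)
    case 0 then show ?case using m by simp
  next
    case (Suc n) then show ?case using isg_period_step[OF s, of "m * R + n"] by simp
  qed
  then show ?thesis
  proof (intro exI allI impI)
    fix t assume "m * R \<le> t"
    then have "t = m * R + (t - m * R)" by simp
    then show "isg M (t + R) = isg M t" using \<open>\<And>n. isg M (m * R + n + R) = isg M (m * R + n)\<close> by metis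
  qed
qed

lemma sol_follows:
  assumes "solution d R C"
  shows "follows d (C (t mod R)) (C (Suc t mod R))"
proof -
  have R: "0 < R" using assms by (simp add: solution_def)
  show ?thesis
  proof (cases "Suc (t mod R) = R")
    case True
    then have "t mod R = R - 1" by simp
    then show ?thesis using assms True by (simp add: mod_Suc solution_def)
  next
    case False
    then have "Suc (t mod R) < R" using R by (metis Suc_lessI mod_less_divisor)
    then show ?thesis using assms False by (simp add: mod_Suc solution_def)
  qed
qed

lemma follows_red:
  assumes f: "follows d C C'" and rc: "r < d - 1" "c < d - 1" and red: "C' (r, c)" "\<not> C (r, c)"
  shows "\<exists>r0<d - 1. C (r0, c) \<and> (\<forall>k. min r r0 \<le> k \<and> k \<le> max r r0 \<longrightarrow> C' (k, c))"
proof -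
  obtain Rs Bs where rs: "\<forall>S\<in>Rs. red_strip d C S" and bs: "\<forall>S\<in>Bs. blue_strip d C S"
    and dj: "\<Union>Rs \<inter> \<Union>Bs = {}"
    and upd: "\<forall>b\<in>boxes d. C' b = (if b \<in> \<Union>Rs then True else if b \<in> \<Union>Bs then False else C b)"
    using f unfolding follows_def by blast
  have "(r, c) \<in> boxes d" using rc by (simp add: boxes_def)
  then have "C' (r, c) = (if (r, c) \<in> \<Union>Rs then True else if (r, c) \<in> \<Union>Bs then False else C (r, c))"
    using upd by blast
  then have "(r, c) \<in> \<Union>Rs" using red by presburger
  then obtain S where S: "S \<in> Rs" "(r, c) \<in> S" by blast
  from S(1) rs have "red_strip d C S" by blast
  then obtain c' a b r1 where st: "a \<le> r1" "r1 \<le> b" "b < d - 1" "c' < d - 1" "C (r1, c')"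
      "S = {(k, c') | k. a \<le> k \<and> k \<le> b}"
    unfolding red_strip_def by blast
  then have cc: "c' = c" "a \<le> r" "r \<le> b" using S by auto
  have K: "C' (k, c)" if "min r r1 \<le> k" "k \<le> max r r1" for k
  proof -
    have "a \<le> k" "k \<le> b" using that st cc by linarith+
    then have "(k, c) \<in> S" using st(6) cc(1) by blast
    then have "(k, c) \<in> \<Union>Rs" using S(1) by blast
    moreover have "(k, c) \<in> boxes d" using \<open>k \<le> b\<close> st(3) cc rc by (simp add: boxes_def)
    then have "C' (k, c) = (if (k, c) \<in> \<Union>Rs then True else if (k, c) \<in> \<Union>Bs then False else C (k, c))"
      using upd by blast
    ultimately show ?thesis by simp
  qed
  show ?thesis
  proof (intro exI conjI allI impI)
    show "r1 < d - 1" using st by simp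
    show "C (r1, c)" using st cc by simp
    fix k assume "min r r1 \<le> k \<and> k \<le> max r r1"
    then show "C' (k, c)" using K by blast
  qed
qed

lemma follows_blue:
  assumes f: "follows d C C'" and rc: "r < d - 1" "c < d - 1" and blue: "\<not> C' (r, c)" "C (r, c)"
  shows "\<exists>c0<d - 1. \<not> C (r, c0) \<and> (\<forall>k. min c c0 \<le> k \<and> k \<le> max c c0 \<longrightarrow> \<not> C' (r, k))"
proof -
  obtain Rs Bs where rs: "\<forall>S\<in>Rs. red_strip d C S" and bs: "\<forall>S\<in>Bs. blue_strip d C S"
    and dj: "\<Union>Rs \<inter> \<Union>Bs = {}"
    and upd: "\<forall>b\<in>boxes d. C' b = (if b \<in> \<Union>Rs then True else if b \<in> \<Union>Bs then False else C b)"
    using f unfolding follows_def by blast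
  have "(r, c) \<in> boxes d" using rc by (simp add: boxes_def)
  then have "C' (r, c) = (if (r, c) \<in> \<Union>Rs then True else if (r, c) \<in> \<Union>Bs then False else C (r, c))"
    using upd by blast
  then have "(r, c) \<in> \<Union>Bs" using blue by presburger
  then obtain S where S: "S \<in> Bs" "(r, c) \<in> S" by blast
  from S(1) bs have "blue_strip d C S" by blast
  then obtain r' a b c1 where st: "a \<le> c1" "c1 \<le> b" "b < d - 1" "r' < d - 1" "\<not> C (r', c1)"
      "S = {(r', k) | k. a \<le> k \<and> k \<le> b}"
    unfolding blue_strip_def by blast
  then have cc: "r' = r" "a \<le> c" "c \<le> b" using S by auto
  have K: "\<not> C' (r, k)" if "min c c1 \<le> k" "k \<le> max c c1" for k
  proof -
    have "a \<le> k" "k \<le> b" using that st cc by linarith+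
    then have "(r, k) \<in> S" using st(6) cc(1) by blast
    then have "(r, k) \<in> \<Union>Bs" using S(1) by blast
    moreover have "(r, k) \<notin> \<Union>Rs" using dj \<open>(r, k) \<in> \<Union>Bs\<close> by blast
    moreover have "(r, k) \<in> boxes d" using \<open>k \<le> b\<close> st(3) cc rc by (simp add: boxes_def)
    then have "C' (r, k) = (if (r, k) \<in> \<Union>Rs then True else if (r, k) \<in> \<Union>Bs then False else C (r, k))"
      using upd by blast
    ultimately show ?thesis by simp
  qed
  show ?thesis
  proof (intro exI conjI allI impI)
    show "c1 < d - 1" using st by simp
    show "\<not> C (r, c1)" using st cc by simp
    fix k assume "min c c1 \<le> k \<and> k \<le> max c c1"
    then show "\<not> C' (r, k)" using K by blast
  qed
qed

lemma chain_iff: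
  assumes "\<And>k. lo \<le> k \<Longrightarrow> Suc k \<le> hi \<Longrightarrow> (P k \<longleftrightarrow> P (Suc k))" "lo \<le> i" "i \<le> hi"
  shows "P i \<longleftrightarrow> P lo"
  using assms(2,3)
proof (induction i)
  case 0 then show ?case by simp
next
  case (Suc i)
  show ?case
  proof (cases "lo = Suc i")
    case True then show ?thesis by simp
  next
    case False
    then have "lo \<le> i" using Suc by simp
    then show ?thesis using Suc assms(1)[of i] by simp
  qed
qed

lemma chain_iff2:
  assumes "\<And>k. lo \<le> k \<Longrightarrow> Suc k \<le> hi \<Longrightarrow> (P k \<longleftrightarrow> P (Suc k))" "lo \<le> i" "i \<le> hi" "lo \<le> j" "j \<le> hi"
  shows "P i \<longleftrightarrow> P j"
  using chain_iff[of lo hi P i, OF assms(1-3)] chain_iff[of lo hi P j, OF assms(1) assms(4-5)] by simp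

section \<open>Dressed X operators in the ISG\<close>

lemma Xbar_step: "Suc r < d \<Longrightarrow> Xbar d (r, c) = pmul (XX (Suc r) c) (Xbar d (Suc r, c))"
  by (auto simp: Xbar_def XX_def pmul_def prod_eq_iff)

lemma Xbar_last: "2 \<le> d \<Longrightarrow> Xbar d (d - 2, c) = XX (d - 1) c"
  by (auto simp: Xbar_def XX_def prod_eq_iff)

lemma Xbar_mem: "(r, j) \<in> fst (Xbar d (r0, c)) \<longleftrightarrow> (j = c \<or> j = Suc c) \<and> Suc r0 \<le> r \<and> r < d"
  by (auto simp: Xbar_def)

lemma commute_ZZ_right: "commute p (ZZ r j) \<longleftrightarrow> ((r, j) \<in> fst p \<longleftrightarrow> (Suc r, j) \<in> fst p)"
proof -
  have "(r, j) \<noteq> (Suc r, j)" by simp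
  then show ?thesis unfolding commute_def ZZ_def using even_card_int2[of "(r,j)" "(Suc r, j)" "fst p"]
    by simp
qed

lemma commute_XX_right: "snd p = {} \<Longrightarrow> commute p (XX k c)"
  by (simp add: commute_def XX_def)

lemma Xbar_snd[simp]: "snd (Xbar d b) = {}" by (simp add: Xbar_def)

lemma Xbar_commute:
  assumes "C (t mod R) (r0, c)" "r0 < d - 1" "c < d - 1" "q \<in> sched d R C t"
  shows "commute (Xbar d (r0, c)) q"
  using assms(4)
proof (cases rule: sched_cases)
  case (1 k c')
  then show ?thesis by (simp add: commute_XX_right)
next
  case (2 r j)
  then have z: "r < d - 1" "j < d" "0 < j \<longrightarrow> \<not> C (t mod R) (r, j - 1)" "j < d - 1 \<longrightarrow> \<not> C (t mod R) (r, j)"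
    by (auto simp: ZZ_in_sched)
  have ne: "\<not> ((j = c \<or> j = Suc c) \<and> r = r0)"
    using z assms(1-3) by auto
  have "(r, j) \<in> fst (Xbar d (r0, c)) \<longleftrightarrow> (Suc r, j) \<in> fst (Xbar d (r0, c))"
    unfolding Xbar_mem using ne z(1) by auto
  then show ?thesis using 2 commute_ZZ_right[of "Xbar d (r0, c)" r j] by simp
qed

lemma sched_in_isg: "q \<in> M t \<Longrightarrow> q \<in> isg M (Suc t)"
  by (auto simp: meas_update_def intro: pgen_base)

lemma isg_survive: "s \<in> isg M t \<Longrightarrow> (\<forall>q\<in>M t. commute s q) \<Longrightarrow> s \<in> isg M (Suc t)"
  by (auto simp: meas_update_def intro: pgen_base)

lemma isg_mul_iff: "a \<in> isg M (Suc t) \<Longrightarrow> (pmul a y \<in> isg M (Suc t) \<longleftrightarrow> y \<in> isg M (Suc t))"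
proof -
  assume a: "a \<in> isg M (Suc t)"
  define G where "G = isg M (Suc t)"
  have cl: "p \<in> G \<Longrightarrow> q \<in> G \<Longrightarrow> pmul p q \<in> G" for p q
    unfolding G_def isg.simps meas_update_def by (rule pgen_mul_closed)
  have "pmul a y \<in> G \<longleftrightarrow> y \<in> G"
  proof
    assume "pmul a y \<in> G"
    then have "pmul a (pmul a y) \<in> G" using cl a G_def by blast
    then show "y \<in> G" by (simp add: pmul_cancel)
  next
    assume "y \<in> G" then show "pmul a y \<in> G" using cl a G_def by blast
  qed
  then show ?thesis by (simp add: G_def)
qed

definition goodX :: "nat \<Rightarrow> nat \<Rightarrow> (nat \<Rightarrow> coloring) \<Rightarrow> nat \<Rightarrow> nat \<Rightarrow> bool" where
  "goodX d R C t c \<longleftrightarrow> (\<forall>r<d - 1. C (t mod R) (r, c) \<longrightarrow> Xbar d (r, c) \<in> isg (sched d R C) (Suc t))"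

lemma run_chain:
  assumes "c < d - 1" "\<And>k. lo \<le> k \<Longrightarrow> k \<le> hi \<Longrightarrow> C (t mod R) (k, c)" "hi < d - 1"
    "lo \<le> i" "i \<le> hi" "lo \<le> j" "j \<le> hi"
  shows "Xbar d (i, c) \<in> isg (sched d R C) (Suc t) \<longleftrightarrow> Xbar d (j, c) \<in> isg (sched d R C) (Suc t)"
proof (rule chain_iff2[of lo hi _ i j])
  fix k assume k: "lo \<le> k" "Suc k \<le> hi"
  have "XX (Suc k) c \<in> sched d R C t"
    using assms(1,3) k assms(2)[of k] assms(2)[of "Suc k"] by (simp add: XX_in_sched)
  then have "XX (Suc k) c \<in> isg (sched d R C) (Suc t)" by (rule sched_in_isg)
  moreover have "Xbar d (k, c) = pmul (XX (Suc k) c) (Xbar d (Suc k, c))"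
    using k assms(3) by (intro Xbar_step) simp
  ultimately show "Xbar d (k, c) \<in> isg (sched d R C) (Suc t) \<longleftrightarrow> Xbar d (Suc k, c) \<in> isg (sched d R C) (Suc t)"
    using isg_mul_iff[of "XX (Suc k) c" "sched d R C" t "Xbar d (Suc k, c)"] by simp
qed (use assms in auto)

lemma goodX_full:
  assumes "2 \<le> d" "c < d - 1" "\<forall>r<d - 1. C (t mod R) (r, c)"
  shows "goodX d R C t c"
  unfolding goodX_def
proof (intro allI impI)
  fix r assume r: "r < d - 1" "C (t mod R) (r, c)"
  have "XX (d - 1) c \<in> sched d R C t"
    using assms by (simp add: XX_in_sched)
  then have "Xbar d (d - 2, c) \<in> isg (sched d R C) (Suc t)"
    using Xbar_last[OF assms(1)] sched_in_isg by metis
  moreover have "Xbar d (r, c) \<in> isg (sched d R C) (Suc t) \<longleftrightarrow> Xbar d (d - 2, c) \<in> isg (sched d R C) (Suc t)"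
    by (rule run_chain[of c d 0 "d - 2"]) (use assms r in auto)
  ultimately show "Xbar d (r, c) \<in> isg (sched d R C) (Suc t)" by simp
qed

lemma goodX_step:
  assumes sol: "solution d R C" and c: "c < d - 1" and g: "goodX d R C t c"
  shows "goodX d R C (Suc t) c"
  unfolding goodX_def
proof (intro allI impI)
  fix r assume r: "r < d - 1" "C (Suc t mod R) (r, c)"
  obtain r0 where r0: "r0 < d - 1" "C (t mod R) (r0, c)"
      "\<forall>k. min r r0 \<le> k \<and> k \<le> max r r0 \<longrightarrow> C (Suc t mod R) (k, c)"
  proof (cases "C (t mod R) (r, c)")
    case True
    have "\<forall>k. min r r \<le> k \<and> k \<le> max r r \<longrightarrow> C (Suc t mod R) (k, c)"
    proof (intro allI impI)
      fix k assume "min r r \<le> k \<and> k \<le> max r r"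
      then have "k = r" by simp
      then show "C (Suc t mod R) (k, c)" using r(2) by simp
    qed
    then show ?thesis using that[of r] r True by blast
  next
    case False then show ?thesis using that follows_red[OF sol_follows[OF sol, of t] r(1) c r(2)] by blast
  qed
  have "Xbar d (r0, c) \<in> isg (sched d R C) (Suc t)" using g r0 unfolding goodX_def by blast
  moreover have "\<forall>q\<in>sched d R C (Suc t). commute (Xbar d (r0, c)) q"
    using Xbar_commute[of C "Suc t" R r0 c d] r0 c by auto
  ultimately have "Xbar d (r0, c) \<in> isg (sched d R C) (Suc (Suc t))" by (rule isg_survive)
  moreover have "Xbar d (r, c) \<in> isg (sched d R C) (Suc (Suc t)) \<longleftrightarrow> Xbar d (r0, c) \<in> isg (sched d R C) (Suc (Suc t))"
    by (rule run_chain[of c d "min r r0" "max r r0"]) (use c r0 r in auto)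
  ultimately show "Xbar d (r, c) \<in> isg (sched d R C) (Suc (Suc t))" by simp
qed

lemma goodX_eventually:
  assumes sol: "solution d R C" and d: "2 \<le> d" and c: "c < d - 1" and t: "R \<le> t"
  shows "goodX d R C t c"
proof -
  obtain j where j: "j < R" "\<forall>r<d - 1. C j (r, c)" using sol c unfolding solution_def by blast
  have "goodX d R C (j + n) c" for n
  proof (induction n)
    case 0 then show ?case using goodX_full[OF d c] j by simp
  next
    case (Suc n) then show ?case using goodX_step[OF sol c] by simp
  qed
  moreover have "t = j + (t - j)" using j t by simp
  ultimately show ?thesis by metis
qed

definition xD :: "event set \<Rightarrow> nat \<Rightarrow> nat \<Rightarrow> nat \<Rightarrow> bool" where
  "xD D c k u \<longleftrightarrow> odd (card {s. s < u \<and> (s, XX k c) \<in> D})"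

lemma card_filter_fst:
  assumes "finite D"
  shows "card {e \<in> D. fst e < u \<and> snd e = p} = card {s. s < u \<and> (s, p) \<in> D}"
proof -
  have "{s. s < u \<and> (s, p) \<in> D} = fst ` {e \<in> D. fst e < u \<and> snd e = p}"
    by force
  moreover have "inj_on fst {e \<in> D. fst e < u \<and> snd e = p}"
    by (auto simp: inj_on_def prod_eq_iff)
  ultimately show ?thesis by (simp add: card_image)
qed

definition evXZ :: "event set \<Rightarrow> bool" where
  "evXZ D \<longleftrightarrow> (\<forall>e\<in>D. (\<exists>k c. snd e = XX k c) \<or> (\<exists>r j. snd e = ZZ r j))"

lemma fst_XX_mem: "(i, j) \<in> fst (XX k c) \<longleftrightarrow> i = k \<and> (j = c \<or> j = Suc c)"
  by (auto simp: XX_def)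

lemma fst_eprod:
  assumes fin: "finite D" and ev: "evXZ D"
  shows "(i, j) \<in> fst (eprod {e \<in> D. fst e < u}) \<longleftrightarrow> (xD D j i u \<noteq> (0 < j \<and> xD D (j - 1) i u))"
proof -
  have "{e \<in> {e \<in> D. fst e < u}. (i, j) \<in> fst (snd e)} =
        {e \<in> D. fst e < u \<and> snd e = XX i j} \<union> {e \<in> D. fst e < u \<and> snd e = XX i (j - 1) \<and> 0 < j}"
  proof (intro set_eqI iffI)
    fix e assume "e \<in> {e \<in> {e \<in> D. fst e < u}. (i, j) \<in> fst (snd e)}"
    then have e: "e \<in> D" "fst e < u" "(i, j) \<in> fst (snd e)" by auto
    from ev e(1) consider k c where "snd e = XX k c" | r j' where "snd e = ZZ r j'"
      unfolding evXZ_def by blast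
    then show "e \<in> {e \<in> D. fst e < u \<and> snd e = XX i j} \<union> {e \<in> D. fst e < u \<and> snd e = XX i (j - 1) \<and> 0 < j}"
    proof cases
      case (1 k c)
      then have "i = k" "j = c \<or> j = Suc c" using e(3) fst_XX_mem by auto
      then show ?thesis using e 1 by auto
    next
      case (2 r j')
      then show ?thesis using e(3) by (simp add: ZZ_def)
    qed
  next
    fix e assume "e \<in> {e \<in> D. fst e < u \<and> snd e = XX i j} \<union> {e \<in> D. fst e < u \<and> snd e = XX i (j - 1) \<and> 0 < j}"
    then show "e \<in> {e \<in> {e \<in> D. fst e < u}. (i, j) \<in> fst (snd e)}"
      by (auto simp: fst_XX_mem)
  qed
  moreover have "{e \<in> D. fst e < u \<and> snd e = XX i j} \<inter> {e \<in> D. fst e < u \<and> snd e = XX i (j - 1) \<and> 0 < j} = {}"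
    by auto
  moreover have "card {e \<in> D. fst e < u \<and> snd e = XX i (j - 1) \<and> 0 < j} =
      (if 0 < j then card {s. s < u \<and> (s, XX i (j - 1)) \<in> D} else 0)"
    using card_filter_fst[OF fin, of u "XX i (j - 1)"] by auto
  ultimately have "card {e \<in> {e \<in> D. fst e < u}. (i, j) \<in> fst (snd e)} =
      card {s. s < u \<and> (s, XX i j) \<in> D} + (if 0 < j then card {s. s < u \<and> (s, XX i (j - 1)) \<in> D} else 0)"
    using card_filter_fst[OF fin, of u "XX i j"] fin by (simp add: card_Un_disjoint)
  then show ?thesis unfolding eprod_def xD_def by auto
qed

lemma snd_eprod_X:
  assumes "\<forall>e\<in>E. \<exists>k c. snd e = XX k c"
  shows "snd (eprod E) = {}"
proof -
  have h: "{e \<in> E. q \<in> snd (snd e)} = {}" for q using assms by (auto simp: XX_def)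
  show ?thesis unfolding eprod_def by (simp only: snd_conv h card.empty) simp
qed

lemma card_lt_Suc: "card {s. s < Suc u \<and> P s} = card {s. s < u \<and> P s} + (if P u then 1 else 0)"
proof (cases "P u")
  case True
  then have "{s. s < Suc u \<and> P s} = insert u {s. s < u \<and> P s}" by auto
  then show ?thesis using True by simp
next
  case False
  then have "{s. s < Suc u \<and> P s} = {s. s < u \<and> P s}" using less_Suc_eq by auto
  then show ?thesis using False by simp
qed

lemma xD_Suc: "xD D c k (Suc u) \<longleftrightarrow> (xD D c k u \<noteq> ((u, XX k c) \<in> D))"
  unfolding xD_def by (simp add: card_lt_Suc)

lemma xD_0[simp]: "\<not> xD D c k 0"
  unfolding xD_def by simp

lemma card_split3:
  fixes u' u :: nat
  assumes "u' < u"
  shows "card {s. s < u \<and> P s} = card {s. s < u' \<and> P s} + (if P u' then 1 else 0) + card {s. u' < s \<and> s < u \<and> P s}"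
proof -
  have "{s. s < u \<and> P s} = {s. s < Suc u' \<and> P s} \<union> {s. u' < s \<and> s < u \<and> P s}"
    using assms by auto
  moreover have "{s. s < Suc u' \<and> P s} \<inter> {s. u' < s \<and> s < u \<and> P s} = {}" by auto
  moreover have f1: "finite {s. s < Suc u' \<and> P s}" by (rule finite_subset[of _ "{..<Suc u'}"]) auto
  moreover have f2: "finite {s. u' < s \<and> s < u \<and> P s}" by (rule finite_subset[of _ "{..<u}"]) auto
  ultimately have "card {s. s < u \<and> P s} = card {s. s < Suc u' \<and> P s} + card {s. u' < s \<and> s < u \<and> P s}"
    using card_Un_disjoint[OF f1 f2] by simp
  then show ?thesis by (simp add: card_lt_Suc)
qed

lemma xD_stable:
  assumes "\<forall>e\<in>E. fst e < U1" "U1 \<le> U"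
  shows "xD E c k U = xD E c k U1"
proof -
  have "{s. s < U \<and> (s, XX k c) \<in> E} = {s. s < U1 \<and> (s, XX k c) \<in> E}"
    using assms by force
  then show ?thesis unfolding xD_def by simp
qed

lemma finite_bound: "finite (D :: event set) \<Longrightarrow> \<exists>U. \<forall>e\<in>D. fst e < U"
proof -
  assume "finite D"
  then have "\<forall>e\<in>D. fst e < Suc (Max (insert 0 (fst ` D)))"
    by (auto intro!: le_imp_less_Suc Max_ge)
  then show ?thesis by blast
qed

section \<open>Detector conditions in span form\<close>

lemma det_span:
  assumes det: "detector M D" and lo: "\<exists>s\<in>fst ` D. s < u" and hi: "\<exists>s\<in>fst ` D. u \<le> s" and q: "q \<in> M u"
  shows "commute (eprod {e \<in> D. fst e < u}) q"
proof -
  have fin: "finite D" using det by (simp add: detector_def)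
  define T where "T = {s \<in> fst ` D. s < u}"
  have finT: "finite T" using fin by (simp add: T_def)
  have neT: "T \<noteq> {}" using lo by (auto simp: T_def)
  define t where "t = Max T"
  have tT: "t \<in> T" using finT neT by (simp add: t_def)
  have tmax: "s \<in> T \<Longrightarrow> s \<le> t" for s using finT by (simp add: t_def)
  have tD: "t \<in> fst ` D" "t < u" using tT by (auto simp: T_def)
  have c1: "\<forall>s\<in>fst ` D. t < s \<longrightarrow> u \<le> s"
  proof (intro ballI impI)
    fix s assume s: "s \<in> fst ` D" "t < s"
    show "u \<le> s"
    proof (rule ccontr)
      assume "\<not> u \<le> s"
      then have "s \<in> T" using s by (auto simp: T_def)
      then show False using tmax[of s] s by simp
    qed
  qed
  have c2: "\<exists>s\<in>fst ` D. t < s" using hi tD by force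
  have "\<forall>q\<in>M u. commute (eprod {e \<in> D. fst e \<le> t}) q"
    using det tD c1 c2 unfolding detector_def by blast
  moreover have "{e \<in> D. fst e \<le> t} = {e \<in> D. fst e < u}"
  proof (intro set_eqI iffI)
    fix e assume "e \<in> {e \<in> D. fst e \<le> t}" then show "e \<in> {e \<in> D. fst e < u}" using tD by auto
  next
    fix e assume e: "e \<in> {e \<in> D. fst e < u}"
    then have "fst e \<in> T" by (auto simp: T_def)
    then show "e \<in> {e \<in> D. fst e \<le> t}" using tmax e by auto
  qed
  ultimately show ?thesis using q by simp
qed

lemma span_det:
  assumes fin: "finite D" and ne: "D \<noteq> {}" and mem: "\<forall>(t, p)\<in>D. p \<in> M t" and pr: "eprod D = pid"
    and sp: "\<And>u q. (\<exists>s\<in>fst ` D. s < u) \<Longrightarrow> (\<exists>s\<in>fst ` D. u \<le> s) \<Longrightarrow> q \<in> M u \<Longrightarrow>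
              commute (eprod {e \<in> D. fst e < u}) q"
  shows "detector M D"
  unfolding detector_def
proof (intro conjI fin ne mem pr ballI allI impI)
  fix t t' q
  assume t: "t \<in> fst ` D" and c: "t < t' \<and> (\<forall>s\<in>fst ` D. t < s \<longrightarrow> t' \<le> s) \<and> (\<exists>s\<in>fst ` D. t < s)"
    and q: "q \<in> M t'"
  have "{e \<in> D. fst e \<le> t} = {e \<in> D. fst e < t'}"
  proof (intro set_eqI iffI)
    fix e assume "e \<in> {e \<in> D. fst e \<le> t}" then show "e \<in> {e \<in> D. fst e < t'}" using c by auto
  next
    fix e assume e: "e \<in> {e \<in> D. fst e < t'}"
    show "e \<in> {e \<in> D. fst e \<le> t}"
    proof (rule ccontr)
      assume "e \<notin> {e \<in> D. fst e \<le> t}"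
      then have "t < fst e" "fst e \<in> fst ` D" using e by auto
      then show False using c e by auto
    qed
  qed
  moreover have "\<exists>s\<in>fst ` D. s < t'" using t c by blast
  moreover have "\<exists>s\<in>fst ` D. t' \<le> s" using c by blast
  ultimately show "commute (eprod {e \<in> D. fst e \<le> t}) q" using sp q by simp
qed

lemma det_fin: "detector M D \<Longrightarrow> finite D" by (simp add: detector_def)
lemma det_mem: "detector M D \<Longrightarrow> (t, p) \<in> D \<Longrightarrow> p \<in> M t" by (auto simp: detector_def)

lemma det_evXZ: "detector (sched d R C) D \<Longrightarrow> evXZ D"
  unfolding evXZ_def
proof
  fix e assume det: "detector (sched d R C) D" and e: "e \<in> D"
  then have "snd e \<in> sched d R C (fst e)" using det_mem[of _ D "fst e" "snd e"] by simp
  then show "(\<exists>k c. snd e = XX k c) \<or> (\<exists>r j. snd e = ZZ r j)"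
    by (cases rule: sched_cases) auto
qed

lemma det_final:
  assumes det: "detector (sched d R C) D" and U: "\<forall>e\<in>D. fst e < U"
  shows "\<not> xD D c k U"
proof -
  have fin: "finite D" using det by (rule det_fin)
  have "{e \<in> D. fst e < U} = D" using U by auto
  then have "fst (eprod {e \<in> D. fst e < U}) = {}" using det by (simp add: detector_def pid_def)
  then have h: "xD D j i U \<longleftrightarrow> (0 < j \<and> xD D (j - 1) i U)" for i j
    using fst_eprod[OF fin det_evXZ[OF det], of i j U] by blast
  have "\<not> xD D j i U" for j i
  proof (induction j)
    case 0 then show ?case using h[of 0 i] by simp
  next
    case (Suc j) then show ?case using h[of "Suc j" i] by simp
  qed
  then show ?thesis by simp
qed

lemma det_outside:
  assumes det: "detector (sched d R C) D" and ns: "\<not> ((\<exists>s\<in>fst ` D. s < u) \<and> (\<exists>s\<in>fst ` D. u \<le> s))"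
  shows "\<not> xD D c k u"
proof (cases "\<exists>s\<in>fst ` D. s < u")
  case False
  then have h: "{s. s < u \<and> (s, XX k c) \<in> D} = {}" by force
  show ?thesis unfolding xD_def h by simp
next
  case True
  then have "\<forall>e\<in>D. fst e < u" using ns by auto
  then show ?thesis by (rule det_final[OF det])
qed

lemma det_ZZ_y:
  assumes det: "detector (sched d R C) D" and z: "ZZ r j \<in> sched d R C u" and j: "0 < j"
  shows "(xD D (j - 1) r u \<noteq> xD D (j - 1) (Suc r) u) = (xD D j r u \<noteq> xD D j (Suc r) u)"
proof (cases "(\<exists>s\<in>fst ` D. s < u) \<and> (\<exists>s\<in>fst ` D. u \<le> s)")
  case True
  then have "commute (eprod {e \<in> D. fst e < u}) (ZZ r j)" using det_span[OF det _ _ z] by blast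
  then have "(r, j) \<in> fst (eprod {e \<in> D. fst e < u}) \<longleftrightarrow> (Suc r, j) \<in> fst (eprod {e \<in> D. fst e < u})"
    by (simp add: commute_ZZ_right)
  then show ?thesis
    using fst_eprod[OF det_fin[OF det] det_evXZ[OF det]] j by auto
next
  case False
  then show ?thesis using det_outside[OF det False] by simp
qed

lemma det_step_blue:
  assumes det: "detector (sched d R C) D" and r: "r < d - 1" and b: "\<not> C (t mod R) (r, c)"
  shows "xD D c r (Suc t) = xD D c r t" "xD D c (Suc r) (Suc t) = xD D c (Suc r) t"
proof -
  have "XX r c \<notin> sched d R C t" using r b by (simp add: XX_in_sched)
  then have "(t, XX r c) \<notin> D" using det_mem[OF det] by blast
  then show "xD D c r (Suc t) = xD D c r t" by (simp add: xD_Suc)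
  have "XX (Suc r) c \<notin> sched d R C t" using r b by (simp add: XX_in_sched)
  then have "(t, XX (Suc r) c) \<notin> D" using det_mem[OF det] by blast
  then show "xD D c (Suc r) (Suc t) = xD D c (Suc r) t" by (simp add: xD_Suc)
qed

lemma det_inv:
  assumes sol: "solution d R C" and det: "detector (sched d R C) D"
  shows "(\<forall>r c. r < d - 1 \<longrightarrow> c < d - 1 \<longrightarrow> \<not> C (t mod R) (r, c) \<longrightarrow> (xD D c r t \<longleftrightarrow> xD D c (Suc r) t))
       \<and> (\<forall>r c. r < d - 1 \<longrightarrow> c < d - 1 \<longrightarrow> \<not> C (t mod R) (r, c) \<longrightarrow> (xD D c r (Suc t) \<longleftrightarrow> xD D c (Suc r) (Suc t)))"
proof (induction t)
  case 0
  show ?case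
  proof (intro conjI allI impI)
    fix r c assume "r < d - 1" "c < d - 1" "\<not> C (0 mod R) (r, c)"
    then show "xD D c r 0 \<longleftrightarrow> xD D c (Suc r) 0" by simp
  next
    fix r c assume a: "r < d - 1" "c < d - 1" "\<not> C (0 mod R) (r, c)"
    show "xD D c r (Suc 0) \<longleftrightarrow> xD D c (Suc r) (Suc 0)"
      using det_step_blue[OF det a(1) a(3)] by simp
  qed
next
  case (Suc t)
  have p1: "xD D c r (Suc t) \<longleftrightarrow> xD D c (Suc r) (Suc t)"
    if rc: "r < d - 1" "c < d - 1" and b: "\<not> C (Suc t mod R) (r, c)" for r c
  proof (cases "C (t mod R) (r, c)")
    case False
    then show ?thesis using Suc.IH rc by blast
  next
    case True
    obtain c0 where c0: "c0 < d - 1" "\<not> C (t mod R) (r, c0)"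
      "\<forall>k. min c c0 \<le> k \<and> k \<le> max c c0 \<longrightarrow> \<not> C (Suc t mod R) (r, k)"
      using follows_blue[OF sol_follows[OF sol, of t] rc b True] by blast
    have y0: "xD D c0 r (Suc t) \<longleftrightarrow> xD D c0 (Suc r) (Suc t)" using Suc.IH c0 rc by blast
    have "(xD D c r (Suc t) \<noteq> xD D c (Suc r) (Suc t)) \<longleftrightarrow> (xD D c0 r (Suc t) \<noteq> xD D c0 (Suc r) (Suc t))"
    proof (rule chain_iff2[of "min c c0" "max c c0" "\<lambda>k. xD D k r (Suc t) \<noteq> xD D k (Suc r) (Suc t)"])
      fix k assume k: "min c c0 \<le> k" "Suc k \<le> max c c0"
      have "ZZ r (Suc k) \<in> sched d R C (Suc t)"
        using k rc c0 c0(3)[rule_format, of k] c0(3)[rule_format, of "Suc k"] by (simp add: ZZ_in_sched)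
      then show "(xD D k r (Suc t) \<noteq> xD D k (Suc r) (Suc t)) = (xD D (Suc k) r (Suc t) \<noteq> xD D (Suc k) (Suc r) (Suc t))"
        using det_ZZ_y[OF det, of r "Suc k" "Suc t"] by simp
    qed auto
    then show ?thesis using y0 by simp
  qed
  show ?case
  proof (intro conjI allI impI)
    fix r c assume "r < d - 1" "c < d - 1" "\<not> C (Suc t mod R) (r, c)"
    then show "xD D c r (Suc t) \<longleftrightarrow> xD D c (Suc r) (Suc t)" by (rule p1)
  next
    fix r c assume a: "r < d - 1" "c < d - 1" "\<not> C (Suc t mod R) (r, c)"
    show "xD D c r (Suc (Suc t)) \<longleftrightarrow> xD D c (Suc r) (Suc (Suc t))"
      using det_step_blue[OF det a(1) a(3)] p1[OF a] by simp
  qed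
qed

section \<open>Column parts\<close>

definition colpart :: "event set \<Rightarrow> nat \<Rightarrow> event set" where
  "colpart D c = {e \<in> D. \<exists>k. snd e = XX k c}"

definition colvalid :: "nat \<Rightarrow> nat \<Rightarrow> (nat \<Rightarrow> coloring) \<Rightarrow> nat \<Rightarrow> event set \<Rightarrow> bool" where
  "colvalid d R C c E \<longleftrightarrow> finite E \<and> (\<forall>e\<in>E. \<exists>k. snd e = XX k c \<and> snd e \<in> sched d R C (fst e))
     \<and> (\<forall>u r j. ZZ r j \<in> sched d R C u \<longrightarrow> (j = c \<or> j = Suc c) \<longrightarrow> (xD E c r u \<longleftrightarrow> xD E c (Suc r) u))
     \<and> (\<exists>U. (\<forall>e\<in>E. fst e < U) \<and> (\<forall>k. \<not> xD E c k U))"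

lemma xD_colpart: "xD (colpart D c) c k u = xD D c k u"
  unfolding xD_def colpart_def by simp

lemma colpart_valid:
  assumes sol: "solution d R C" and det: "detector (sched d R C) D" and c: "c < d - 1"
  shows "colvalid d R C c (colpart D c)"
  unfolding colvalid_def
proof (intro conjI allI impI)
  show "finite (colpart D c)" using det_fin[OF det] by (simp add: colpart_def)
  show "\<forall>e\<in>colpart D c. \<exists>k. snd e = XX k c \<and> snd e \<in> sched d R C (fst e)"
    using det_mem[OF det] by (force simp: colpart_def)
next
  fix u r j assume z: "ZZ r j \<in> sched d R C u" and j: "j = c \<or> j = Suc c"
  have "r < d - 1" "\<not> C (u mod R) (r, c)" using z j c by (auto simp: ZZ_in_sched)
  then show "xD (colpart D c) c r u = xD (colpart D c) c (Suc r) u"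
    using det_inv[OF sol det, of u] c by (simp add: xD_colpart)
next
  obtain U where U: "\<forall>e\<in>D. fst e < U" using finite_bound[OF det_fin[OF det]] by blast
  then have "\<forall>e\<in>colpart D c. fst e < U" by (simp add: colpart_def)
  moreover have "\<forall>k. \<not> xD (colpart D c) c k U" using det_final[OF det U] by (simp add: xD_colpart)
  ultimately show "\<exists>U. (\<forall>e\<in>colpart D c. fst e < U) \<and> (\<forall>k. \<not> xD (colpart D c) c k U)" by blast
qed

lemma colvalid_other:
  assumes "colvalid d R C c E" "c' \<noteq> c"
  shows "\<not> xD E c' k u"
proof -
  have h: "{s. s < u \<and> (s, XX k c') \<in> E} = {}" using assms unfolding colvalid_def by fastforce
  show ?thesis unfolding xD_def h by simp
qed

lemma colvalid_det:
  assumes v: "colvalid d R C c E" and ne: "E \<noteq> {}"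
  shows "detector (sched d R C) E"
proof -
  have fin: "finite E" and mem: "\<forall>e\<in>E. \<exists>k. snd e = XX k c \<and> snd e \<in> sched d R C (fst e)"
    and cons: "\<And>u r j. ZZ r j \<in> sched d R C u \<Longrightarrow> (j = c \<or> j = Suc c) \<Longrightarrow> (xD E c r u \<longleftrightarrow> xD E c (Suc r) u)"
    using v unfolding colvalid_def by blast+
  obtain U where U: "\<forall>e\<in>E. fst e < U" "\<forall>k. \<not> xD E c k U" using v unfolding colvalid_def by blast
  have ev: "evXZ E" using mem unfolding evXZ_def by blast
  have allX: "\<forall>e\<in>E. \<exists>k c. snd e = XX k c" using mem by blast
  have xo: "\<not> xD E c' k u" if "c' \<noteq> c" for c' k u
    using colvalid_other[OF v that] .
  have xU: "\<not> xD E c' k U" for c' k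
    using xo U(2) by (cases "c' = c") auto
  show ?thesis
  proof (rule span_det[OF fin ne])
    show "\<forall>(t, p)\<in>E. p \<in> sched d R C t" using mem by auto
    have "{e \<in> E. fst e < U} = E" using U by auto
    moreover have "fst (eprod {e \<in> E. fst e < U}) = {}"
    proof -
      have "(i, j) \<notin> fst (eprod {e \<in> E. fst e < U})" for i j
        unfolding fst_eprod[OF fin ev, of i j U] using xU by simp
      then show ?thesis by auto
    qed
    moreover have "snd (eprod E) = {}" by (rule snd_eprod_X[OF allX])
    ultimately show "eprod E = pid" by (simp add: pid_def prod_eq_iff)
  next
    fix u q assume q: "q \<in> sched d R C u"
    have s0: "snd (eprod {e \<in> E. fst e < u}) = {}" using allX by (intro snd_eprod_X) auto
    from q show "commute (eprod {e \<in> E. fst e < u}) q"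
    proof (cases rule: sched_cases)
      case (1 k c') then show ?thesis using s0 by (simp add: commute_XX_right)
    next
      case (2 r j)
      have "(r, j) \<in> fst (eprod {e \<in> E. fst e < u}) \<longleftrightarrow> (Suc r, j) \<in> fst (eprod {e \<in> E. fst e < u})"
        unfolding fst_eprod[OF fin ev]
      proof -
        consider "j = c" | "j = Suc c" | "j \<noteq> c" "j \<noteq> Suc c" by blast
        then show "(xD E j r u \<noteq> (0 < j \<and> xD E (j - 1) r u)) = (xD E j (Suc r) u \<noteq> (0 < j \<and> xD E (j - 1) (Suc r) u))"
        proof cases
          case 1
          have e: "xD E c r u \<longleftrightarrow> xD E c (Suc r) u" using cons 2 1 by blast
          have "0 < j \<Longrightarrow> j - 1 \<noteq> c" using 1 by simp
          then show ?thesis using e 1 xo by auto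
        next
          case 2
          have e: "xD E c r u \<longleftrightarrow> xD E c (Suc r) u" using cons \<open>ZZ r j \<in> sched d R C u\<close> 2 by blast
          show ?thesis using e 2 xo[of "Suc c"] by simp
        next
          case 3
          have "0 < j \<Longrightarrow> j - 1 \<noteq> c" using 3 by auto
          then show ?thesis using 3 xo by auto
        qed
      qed
      then show ?thesis using 2 by (simp add: commute_ZZ_right)
    qed
  qed
qed

lemma xD_bound:
  assumes v: "colvalid d R C c E" and x: "xD E c k u"
  shows "k < d"
proof (rule ccontr)
  assume "\<not> k < d"
  then have "XX k c \<notin> sched d R C s" for s by (simp add: XX_in_sched)
  then have h: "{s. s < u \<and> (s, XX k c) \<in> E} = {}" using v unfolding colvalid_def by fastforce
  have "\<not> xD E c k u" unfolding xD_def h by simp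
  then show False using x by simp
qed

lemma cut_col:
  assumes v: "colvalid d R C c E" and c: "c < d - 1" and full: "\<forall>r<d - 1. C (u' mod R) (r, c)"
  defines "Z \<equiv> {(u', XX k c) | k. xD E c k u'}"
  defines "A \<equiv> {e \<in> E. fst e < u'} \<union> Z"
  defines "B \<equiv> {e. (e \<in> E \<and> u' < fst e) \<or> (fst e = u' \<and> ((e \<in> E) \<noteq> (e \<in> Z)))}"
  shows "colvalid d R C c A" "colvalid d R C c B" "E = symd A B"
    "\<forall>e\<in>A. fst e \<le> u'" "\<forall>e\<in>B. u' \<le> fst e \<and> (u' < fst e \<longrightarrow> e \<in> E)"
proof -
  have fin: "finite E" and mem: "\<forall>e\<in>E. \<exists>k. snd e = XX k c \<and> snd e \<in> sched d R C (fst e)"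
    and cons: "\<And>u r j. ZZ r j \<in> sched d R C u \<Longrightarrow> (j = c \<or> j = Suc c) \<Longrightarrow> (xD E c r u \<longleftrightarrow> xD E c (Suc r) u)"
    using v unfolding colvalid_def by blast+
  obtain UE where UE: "\<forall>e\<in>E. fst e < UE" "\<forall>k. \<not> xD E c k UE" using v unfolding colvalid_def by blast
  have Zmem: "(s, p) \<in> Z \<longleftrightarrow> s = u' \<and> (\<exists>k. p = XX k c \<and> xD E c k u')" for s p
    unfolding Z_def by blast
  have ZXX: "(s, XX k c) \<in> Z \<longleftrightarrow> s = u' \<and> xD E c k u'" for s k
    unfolding Zmem by auto
  have Zsched: "\<forall>e\<in>Z. \<exists>k. snd e = XX k c \<and> snd e \<in> sched d R C (fst e)"
  proof
    fix e assume "e \<in> Z"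
    then obtain k where k: "e = (u', XX k c)" "xD E c k u'" unfolding Z_def by blast
    have "k < d" by (rule xD_bound[OF v k(2)])
    then have "XX k c \<in> sched d R C u'" using c full by (simp add: XX_in_sched)
    then show "\<exists>k. snd e = XX k c \<and> snd e \<in> sched d R C (fst e)" using k by auto
  qed
  have finZ: "finite Z"
  proof -
    have "Z \<subseteq> (\<lambda>k. (u', XX k c)) ` {..<d}" unfolding Z_def using xD_bound[OF v] by blast
    then show ?thesis by (rule finite_subset) simp
  qed
  have finA: "finite A" using fin finZ by (simp add: A_def)
  have finB: "finite B"
  proof -
    have "B \<subseteq> E \<union> Z" unfolding B_def by blast
    then show ?thesis using fin finZ by (meson finite_UnI finite_subset)
  qed
  have memA: "\<forall>e\<in>A. \<exists>k. snd e = XX k c \<and> snd e \<in> sched d R C (fst e)"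
    using mem Zsched unfolding A_def by blast
  have memB: "\<forall>e\<in>B. \<exists>k. snd e = XX k c \<and> snd e \<in> sched d R C (fst e)"
    using mem Zsched unfolding B_def by blast
  have xA: "xD A c k u \<longleftrightarrow> u \<le> u' \<and> xD E c k u" for k u
  proof (cases "u \<le> u'")
    case True
    have "{s. s < u \<and> (s, XX k c) \<in> A} = {s. s < u \<and> (s, XX k c) \<in> E}"
      using True unfolding A_def by (auto simp: ZXX)
    then show ?thesis using True by (simp add: xD_def)
  next
    case False
    then have lt: "u' < u" by simp
    have "card {s. s < u \<and> (s, XX k c) \<in> A} = card {s. s < u' \<and> (s, XX k c) \<in> A}
       + (if (u', XX k c) \<in> A then 1 else 0) + card {s. u' < s \<and> s < u \<and> (s, XX k c) \<in> A}"
      by (rule card_split3[OF lt])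
    moreover have "{s. s < u' \<and> (s, XX k c) \<in> A} = {s. s < u' \<and> (s, XX k c) \<in> E}"
      unfolding A_def by (auto simp: ZXX)
    moreover have "(u', XX k c) \<in> A \<longleftrightarrow> xD E c k u'"
      unfolding A_def by (auto simp: ZXX)
    moreover have "{s. u' < s \<and> s < u \<and> (s, XX k c) \<in> A} = {}"
      unfolding A_def by (auto simp: ZXX)
    ultimately have "card {s. s < u \<and> (s, XX k c) \<in> A} = card {s. s < u' \<and> (s, XX k c) \<in> E}
       + (if xD E c k u' then 1 else 0)" by simp
    then show ?thesis using lt by (simp add: xD_def)
  qed
  have xB: "xD B c k u \<longleftrightarrow> u' < u \<and> xD E c k u" for k u
  proof (cases "u' < u")
    case False
    have h: "{s. s < u \<and> (s, XX k c) \<in> B} = {}"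
      using False unfolding B_def by auto
    show ?thesis unfolding xD_def h using False by simp
  next
    case True
    have "card {s. s < u \<and> (s, XX k c) \<in> B} = card {s. s < u' \<and> (s, XX k c) \<in> B}
       + (if (u', XX k c) \<in> B then 1 else 0) + card {s. u' < s \<and> s < u \<and> (s, XX k c) \<in> B}"
      by (rule card_split3[OF True])
    moreover have "{s. s < u' \<and> (s, XX k c) \<in> B} = {}"
      unfolding B_def by auto
    moreover have "(u', XX k c) \<in> B \<longleftrightarrow> ((u', XX k c) \<in> E) \<noteq> xD E c k u'"
      unfolding B_def by (auto simp: ZXX)
    moreover have "{s. u' < s \<and> s < u \<and> (s, XX k c) \<in> B} = {s. u' < s \<and> s < u \<and> (s, XX k c) \<in> E}"
      unfolding B_def by auto
    moreover have "card {s. s < u \<and> (s, XX k c) \<in> E} = card {s. s < u' \<and> (s, XX k c) \<in> E}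
       + (if (u', XX k c) \<in> E then 1 else 0) + card {s. u' < s \<and> s < u \<and> (s, XX k c) \<in> E}"
      by (rule card_split3[OF True])
    ultimately show ?thesis using True by (auto simp: xD_def)
  qed
  show "colvalid d R C c A"
    unfolding colvalid_def
  proof (intro conjI finA memA allI impI)
    fix u r j assume "ZZ r j \<in> sched d R C u" "j = c \<or> j = Suc c"
    then show "xD A c r u = xD A c (Suc r) u" using cons xA by blast
  next
    have "\<forall>e\<in>A. fst e < Suc u'" unfolding A_def Z_def by auto
    moreover have "\<forall>k. \<not> xD A c k (Suc u')" using xA by simp
    ultimately show "\<exists>U. (\<forall>e\<in>A. fst e < U) \<and> (\<forall>k. \<not> xD A c k U)" by blast
  qed
  show "colvalid d R C c B"
    unfolding colvalid_def
  proof (intro conjI finB memB allI impI)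
    fix u r j assume "ZZ r j \<in> sched d R C u" "j = c \<or> j = Suc c"
    then show "xD B c r u = xD B c (Suc r) u" using cons xB by blast
  next
    define U where "U = max UE (Suc u')"
    have "\<forall>e\<in>B. fst e < U" using UE(1) unfolding B_def U_def by fastforce
    moreover have "\<forall>k. \<not> xD B c k U"
    proof
      fix k
      have "xD E c k U = xD E c k UE" by (rule xD_stable[OF UE(1)]) (simp add: U_def)
      then show "\<not> xD B c k U" using xB UE(2) by simp
    qed
    ultimately show "\<exists>U. (\<forall>e\<in>B. fst e < U) \<and> (\<forall>k. \<not> xD B c k U)" by blast
  qed
  show "E = symd A B"
  proof (rule set_eqI)
    fix e :: event
    obtain s p where e: "e = (s, p)" by (cases e)
    consider "s < u'" | "s = u'" | "u' < s" by linarith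
    then show "e \<in> E \<longleftrightarrow> e \<in> symd A B"
    proof cases
      case 1 then show ?thesis unfolding A_def B_def e using Zmem by auto
    next
      case 2 then show ?thesis unfolding A_def B_def e by auto
    next
      case 3 then show ?thesis unfolding A_def B_def e using Zmem by auto
    qed
  qed
  show "\<forall>e\<in>A. fst e \<le> u'" unfolding A_def Z_def by auto
  show "\<forall>e\<in>B. u' \<le> fst e \<and> (u' < fst e \<longrightarrow> e \<in> E)" unfolding B_def by auto
qed

definition goodD :: "(nat \<Rightarrow> pauli set) \<Rightarrow> nat \<Rightarrow> event set \<Rightarrow> bool" where
  "goodD M w E \<longleftrightarrow> (\<exists>F. finite F \<and> (\<forall>D'\<in>F. detector M D' \<and> det_weight D' \<le> w) \<and> E = symd_family F)"

lemma parity_symd: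
  assumes "finite X" "finite Y"
  shows "odd (card (symd X Y)) \<longleftrightarrow> (odd (card X) \<noteq> odd (card Y))"
proof -
  have "card X + card Y = card (X \<union> Y) + card (X \<inter> Y)" using card_Un_Int[OF assms] .
  moreover have "X \<union> Y = symd X Y \<union> (X \<inter> Y)" by auto
  moreover have "symd X Y \<inter> (X \<inter> Y) = {}" by auto
  moreover have "finite (symd X Y)" using assms by (simp add: symd_def)
  ultimately have "card X + card Y = card (symd X Y) + 2 * card (X \<inter> Y)"
    using assms by (simp add: card_Un_disjoint)
  then show ?thesis by presburger
qed

lemma symd_family_symd:
  assumes "finite F1" "finite F2"
  shows "symd_family (symd F1 F2) = symd (symd_family F1) (symd_family F2)"
proof (rule set_eqI)
  fix e
  have "{D \<in> symd F1 F2. e \<in> D} = symd {D \<in> F1. e \<in> D} {D \<in> F2. e \<in> D}" by auto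
  then show "e \<in> symd_family (symd F1 F2) \<longleftrightarrow> e \<in> symd (symd_family F1) (symd_family F2)"
    unfolding symd_family_def using parity_symd[of "{D \<in> F1. e \<in> D}" "{D \<in> F2. e \<in> D}"] assms by simp
qed

lemma goodD_empty: "goodD M w {}"
  unfolding goodD_def symd_family_def by (rule exI[of _ "{}"]) simp

lemma goodD_single: "detector M D \<Longrightarrow> det_weight D \<le> w \<Longrightarrow> goodD M w D"
  unfolding goodD_def symd_family_def
proof (rule exI[of _ "{D}"], intro conjI)
  show "D = {e. odd (card {D' \<in> {D}. e \<in> D'})}"
  proof (rule set_eqI)
    fix e
    show "e \<in> D \<longleftrightarrow> e \<in> {e. odd (card {D' \<in> {D}. e \<in> D'})}"
    proof (cases "e \<in> D")
      case True
      then have "{D' \<in> {D}. e \<in> D'} = {D}" by auto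
      then show ?thesis using True by simp
    next
      case False
      then have h: "{D' \<in> {D}. e \<in> D'} = {}" by auto
      show ?thesis unfolding h card.empty mem_Collect_eq using False by simp
    qed
  qed
qed auto

lemma goodD_symd:
  assumes "goodD M w A" "goodD M w B"
  shows "goodD M w (symd A B)"
proof -
  obtain F1 where F1: "finite F1" "\<forall>D'\<in>F1. detector M D' \<and> det_weight D' \<le> w" "A = symd_family F1"
    using assms(1) unfolding goodD_def by blast
  obtain F2 where F2: "finite F2" "\<forall>D'\<in>F2. detector M D' \<and> det_weight D' \<le> w" "B = symd_family F2"
    using assms(2) unfolding goodD_def by blast
  have "finite (symd F1 F2)" using F1(1) F2(1) by (simp add: symd_def)
  moreover have "\<forall>D'\<in>symd F1 F2. detector M D' \<and> det_weight D' \<le> w" using F1(2) F2(2) by auto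
  moreover have "symd A B = symd_family (symd F1 F2)" using symd_family_symd[OF F1(1) F2(1)] F1(3) F2(3) by simp
  ultimately show ?thesis unfolding goodD_def by blast
qed

lemma pweight_XX: "pweight (XX k c) = 2"
  by (simp add: pweight_def XX_def)

lemma colvalid_weight:
  assumes v: "colvalid d R C c E" and w: "\<forall>e\<in>E. a \<le> fst e \<and> fst e \<le> a + R"
  shows "det_weight E \<le> 2 * ((R + 1) * d)"
proof -
  have mem: "\<forall>e\<in>E. \<exists>k. snd e = XX k c \<and> snd e \<in> sched d R C (fst e)" using v unfolding colvalid_def by blast
  have "det_weight E = (\<Sum>e\<in>E. 2)"
    unfolding det_weight_def using mem pweight_XX by (intro sum.cong) auto
  also have "\<dots> = 2 * card E" by simp
  also have "card E \<le> (R + 1) * d"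
  proof -
    have "E \<subseteq> {a..a + R} \<times> ((\<lambda>k. XX k c) ` {..<d})"
    proof
      fix e assume e: "e \<in> E"
      then obtain k where k: "snd e = XX k c" "XX k c \<in> sched d R C (fst e)" using mem by auto
      then have "k < d" by (simp add: XX_in_sched)
      then show "e \<in> {a..a + R} \<times> ((\<lambda>k. XX k c) ` {..<d})" using e w k by (cases e) auto
    qed
    then have "card E \<le> card ({a..a + R} \<times> ((\<lambda>k. XX k c) ` {..<d}))" by (rule card_mono[rotated]) simp
    also have "\<dots> = (R + 1) * card ((\<lambda>k. XX k c) ` {..<d})" by (simp add: card_cartesian_product)
    also have "\<dots> \<le> (R + 1) * d"
      using card_image_le[of "{..<d}" "\<lambda>k. XX k c"] by (intro mult_le_mono2) simp
    finally show ?thesis .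
  qed
  then have "2 * card E \<le> 2 * ((R + 1) * d)" by simp
  finally show ?thesis .
qed

lemma colvalid_short_good:
  assumes v: "colvalid d R C c E" and w: "\<forall>e\<in>E. a \<le> fst e \<and> fst e \<le> a + R" and R: "0 < R"
  shows "goodD (sched d R C) (4 * R * d) E"
proof (cases "E = {}")
  case True then show ?thesis by (simp add: goodD_empty)
next
  case False
  have "det_weight E \<le> 2 * ((R + 1) * d)" by (rule colvalid_weight[OF v w])
  also have "\<dots> \<le> 4 * R * d" using R by (simp add: algebra_simps)
  finally show ?thesis using colvalid_det[OF v False] by (intro goodD_single)
qed

lemma col_decomp:
  assumes sol: "solution d R C" and c: "c < d - 1"
  shows "colvalid d R C c E \<Longrightarrow> \<forall>e\<in>E. fst e < n \<Longrightarrow> goodD (sched d R C) (4 * R * d) E"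
proof (induction n arbitrary: E)
  case 0 then have "E = {}" by auto
  then show ?case by (simp add: goodD_empty)
next
  case (Suc m)
  have R: "0 < R" using sol by (simp add: solution_def)
  obtain jc where jc: "jc < R" "\<forall>r<d - 1. C jc (r, c)" using sol c unfolding solution_def by blast
  show ?case
  proof (cases "Suc m \<le> R")
    case True
    have "\<forall>e\<in>E. 0 \<le> fst e \<and> fst e \<le> 0 + R" using Suc.prems(2) True by auto
    then show ?thesis by (rule colvalid_short_good[OF Suc.prems(1) _ R])
  next
    case False
    define q where "q = (m - 1 - jc) div R"
    define rho where "rho = (m - 1 - jc) mod R"
    define u' where "u' = jc + R * q"
    have "m - 1 - jc = q * R + rho" unfolding q_def rho_def by simp
    moreover have "rho < R" unfolding rho_def using R by simp
    moreover have "jc \<le> m - 1" using False jc by simp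
    ultimately have u1: "u' < m" and u2: "m \<le> u' + R" unfolding u'_def using False by (simp_all add: algebra_simps)
    have umod: "u' mod R = jc" unfolding u'_def using jc by simp
    have full: "\<forall>r<d - 1. C (u' mod R) (r, c)" using jc umod by simp
    note cut = cut_col[OF Suc.prems(1) c full]
    define Z where "Z = {(u', XX k c) | k. xD E c k u'}"
    define A where "A = {e \<in> E. fst e < u'} \<union> Z"
    define B where "B = {e. (e \<in> E \<and> u' < fst e) \<or> (fst e = u' \<and> ((e \<in> E) \<noteq> (e \<in> Z)))}"
    have vA: "colvalid d R C c A" and vB: "colvalid d R C c B" and eq: "E = symd A B"
      and rA: "\<forall>e\<in>A. fst e \<le> u'" and rB: "\<forall>e\<in>B. u' \<le> fst e \<and> (u' < fst e \<longrightarrow> e \<in> E)"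
      using cut unfolding A_def B_def Z_def by blast+
    have "\<forall>e\<in>A. fst e < m" using rA u1 by fastforce
    then have gA: "goodD (sched d R C) (4 * R * d) A" using Suc.IH vA by blast
    have "\<forall>e\<in>B. u' \<le> fst e \<and> fst e \<le> u' + R"
    proof
      fix e assume e: "e \<in> B"
      show "u' \<le> fst e \<and> fst e \<le> u' + R"
      proof (cases "u' < fst e")
        case True
        then have "e \<in> E" using rB e by blast
        then have "fst e < Suc m" using Suc.prems(2) by blast
        then show ?thesis using u2 rB e by fastforce
      next
        case False then show ?thesis using rB e by fastforce
      qed
    qed
    then have gB: "goodD (sched d R C) (4 * R * d) B" by (rule colvalid_short_good[OF vB _ R])
    show ?thesis using goodD_symd[OF gA gB] eq by simp
  qed
qed

definition Xpart :: "event set \<Rightarrow> event set" where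
  "Xpart D = {e \<in> D. \<exists>k c. snd e = XX k c}"

lemma Xpart_good:
  assumes sol: "solution d R C" and det: "detector (sched d R C) D"
  shows "goodD (sched d R C) (4 * R * d) (Xpart D)"
proof -
  define XP where "XP n = {e \<in> D. \<exists>k c. c < n \<and> snd e = XX k c}" for n
  obtain U where U: "\<forall>e\<in>D. fst e < U" using finite_bound[OF det_fin[OF det]] by blast
  have "goodD (sched d R C) (4 * R * d) (XP n)" for n
  proof (induction n)
    case 0
    have "XP 0 = {}" unfolding XP_def by auto
    then show ?case by (simp add: goodD_empty)
  next
    case (Suc n)
    have eq: "XP (Suc n) = symd (XP n) (colpart D n)"
      unfolding XP_def colpart_def by (auto simp: less_Suc_eq)
    have "goodD (sched d R C) (4 * R * d) (colpart D n)"
    proof (cases "n < d - 1")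
      case True
      have "\<forall>e\<in>colpart D n. fst e < U" using U by (simp add: colpart_def)
      then show ?thesis using col_decomp[OF sol True colpart_valid[OF sol det True]] by blast
    next
      case False
      have "colpart D n = {}"
      proof -
        have "\<not> (e \<in> D \<and> snd e = XX k n)" for e k
        proof
          assume e: "e \<in> D \<and> snd e = XX k n"
          have "(fst e, snd e) \<in> D" using conjunct1[OF e] by (simp only: prod.collapse)
          then have "XX k n \<in> sched d R C (fst e)" using det_mem[OF det, of "fst e" "snd e"] e by simp
          then show False using False by (simp add: XX_in_sched)
        qed
        then show ?thesis unfolding colpart_def by blast
      qed
      then show ?thesis by (simp add: goodD_empty)
    qed
    then show ?case using goodD_symd[OF Suc.IH] eq by simp
  qed
  moreover have "XP (d - 1) = Xpart D"
  proof -
    have "c < d - 1" if "e \<in> D" "snd e = XX k c" for e k c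
    proof -
      have "(fst e, snd e) \<in> D" using that(1) by (simp only: prod.collapse)
      then have "XX k c \<in> sched d R C (fst e)" using det_mem[OF det, of "fst e" "snd e"] that by simp
      then show ?thesis by (simp add: XX_in_sched)
    qed
    then show ?thesis unfolding XP_def Xpart_def by blast
  qed
  ultimately show ?thesis by metis
qed

section \<open>Transposition symmetry\<close>

definition tr :: "pauli \<Rightarrow> pauli" where
  "tr p = (prod.swap ` snd p, prod.swap ` fst p)"

definition trE :: "event \<Rightarrow> event" where
  "trE e = (fst e, tr (snd e))"

definition ctc :: "coloring \<Rightarrow> coloring" where
  "ctc C b = (\<not> C (prod.swap b))"

definition CT :: "(nat \<Rightarrow> coloring) \<Rightarrow> nat \<Rightarrow> coloring" where
  "CT C j = ctc (C j)"

lemma swap_swap_image[simp]: "prod.swap ` prod.swap ` A = A"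
  by (simp add: image_image)

lemma tr_tr[simp]: "tr (tr p) = p"
  by (simp add: tr_def)

lemma trE_trE[simp]: "trE (trE e) = e"
  by (simp add: trE_def)

lemma tr_inj: "tr p = tr q \<longleftrightarrow> p = q"
  by (metis tr_tr)

lemma inj_tr: "inj tr" by (simp add: inj_def tr_inj)

lemma inj_trE: "inj trE" by (metis injI trE_trE)

lemma tr_XX[simp]: "tr (XX i j) = ZZ j i"
  by (auto simp: tr_def XX_def ZZ_def)

lemma tr_ZZ[simp]: "tr (ZZ i j) = XX j i"
  by (auto simp: tr_def XX_def ZZ_def)

lemma tr_pid[simp]: "tr pid = pid" by (simp add: tr_def pid_def)

lemma swap_image_symd: "prod.swap ` symd A B = symd (prod.swap ` A) (prod.swap ` B)"
  by (auto simp: symd_def)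

lemma tr_pmul: "tr (pmul p q) = pmul (tr p) (tr q)"
  by (simp add: tr_def pmul_def swap_image_symd)

lemma card_swap_image: "card (prod.swap ` A) = card A"
  by (simp add: card_image)

lemma commute_tr: "commute (tr p) (tr q) \<longleftrightarrow> commute p q"
proof -
  have a: "prod.swap ` A \<inter> prod.swap ` B = prod.swap ` (A \<inter> B)" for A B :: "qubit set"
    by auto
  show ?thesis unfolding commute_def tr_def
    by (simp add: a card_swap_image add.commute Int_commute)
qed

lemma pweight_tr: "pweight (tr p) = pweight p"
proof -
  have "prod.swap ` snd p \<union> prod.swap ` fst p = prod.swap ` (fst p \<union> snd p)" by auto
  then show ?thesis unfolding pweight_def tr_def by (simp add: card_swap_image)
qed

lemma pgen_tr: "pgen (tr ` M) = tr ` pgen M"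
proof
  show "pgen (tr ` M) \<subseteq> tr ` pgen M"
  proof
    fix x assume "x \<in> pgen (tr ` M)"
    then show "x \<in> tr ` pgen M"
    proof (induction x rule: pgen.induct)
      case pgen_id
      have "tr pid = pid" by simp
      then show ?case using pgen.pgen_id by (metis imageI)
    next
      case (pgen_mul p q)
      then obtain p0 q0 where "p = tr p0" "p0 \<in> M" "q = tr q0" "q0 \<in> pgen M" by blast
      then have "pmul p q = tr (pmul p0 q0)" "pmul p0 q0 \<in> pgen M" by (simp_all add: tr_pmul pgen.pgen_mul)
      then show ?case by blast
    qed
  qed
  show "tr ` pgen M \<subseteq> pgen (tr ` M)"
  proof
    fix x assume "x \<in> tr ` pgen M"
    then obtain y where y: "x = tr y" "y \<in> pgen M" by blast
    from y(2) have "tr y \<in> pgen (tr ` M)"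
    proof (induction y rule: pgen.induct)
      case pgen_id then show ?case by (simp add: pgen.pgen_id)
    next
      case (pgen_mul p q) then show ?case by (simp add: tr_pmul pgen.pgen_mul)
    qed
    then show "x \<in> pgen (tr ` M)" using y by simp
  qed
qed

lemma meas_update_tr: "meas_update (tr ` S) (tr ` Ms) = tr ` meas_update S Ms"
proof -
  have "{s \<in> tr ` S. \<forall>m\<in>tr ` Ms. commute s m} \<union> tr ` Ms = tr ` ({s \<in> S. \<forall>m\<in>Ms. commute s m} \<union> Ms)"
  proof (intro set_eqI iffI)
    fix x assume "x \<in> {s \<in> tr ` S. \<forall>m\<in>tr ` Ms. commute s m} \<union> tr ` Ms"
    then show "x \<in> tr ` ({s \<in> S. \<forall>m\<in>Ms. commute s m} \<union> Ms)"
    proof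
      assume "x \<in> {s \<in> tr ` S. \<forall>m\<in>tr ` Ms. commute s m}"
      then obtain s where s: "x = tr s" "s \<in> S" "\<forall>m\<in>Ms. commute (tr s) (tr m)" by auto
      then have "\<forall>m\<in>Ms. commute s m" using commute_tr by blast
      then show ?thesis using s by blast
    next
      assume "x \<in> tr ` Ms" then show ?thesis by blast
    qed
  next
    fix x assume "x \<in> tr ` ({s \<in> S. \<forall>m\<in>Ms. commute s m} \<union> Ms)"
    then obtain y where y: "x = tr y" "y \<in> {s \<in> S. \<forall>m\<in>Ms. commute s m} \<union> Ms" by blast
    then show "x \<in> {s \<in> tr ` S. \<forall>m\<in>tr ` Ms. commute s m} \<union> tr ` Ms"
      using commute_tr by auto
  qed
  then show ?thesis unfolding meas_update_def by (simp add: pgen_tr)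
qed

lemma isg_tr: "isg (\<lambda>t. tr ` M t) t = tr ` isg M t"
proof (induction t)
  case 0 then show ?case by simp
next
  case (Suc t) then show ?case by (simp add: meas_update_tr)
qed

lemma sched_CT: "sched d R (CT C) t = tr ` sched d R C t"
proof (intro set_eqI iffI)
  fix q assume "q \<in> sched d R (CT C) t"
  then show "q \<in> tr ` sched d R C t"
  proof (cases rule: sched_cases)
    case (1 k c)
    then have "ZZ c k \<in> sched d R C t" by (simp add: XX_in_sched ZZ_in_sched CT_def ctc_def)
    then show ?thesis using 1 by (metis image_eqI tr_ZZ)
  next
    case (2 r j)
    then have "XX j r \<in> sched d R C t" by (simp add: XX_in_sched ZZ_in_sched CT_def ctc_def)
    then show ?thesis using 2 by (metis image_eqI tr_XX)
  qed
next
  fix q assume "q \<in> tr ` sched d R C t"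
  then obtain p where p: "q = tr p" "p \<in> sched d R C t" by blast
  from p(2) show "q \<in> sched d R (CT C) t"
  proof (cases rule: sched_cases)
    case (1 k c)
    then show ?thesis using p by (simp add: XX_in_sched ZZ_in_sched CT_def ctc_def)
  next
    case (2 r j)
    then show ?thesis using p by (simp add: XX_in_sched ZZ_in_sched CT_def ctc_def)
  qed
qed

lemma sched_CT_fun: "sched d R (CT C) = (\<lambda>t. tr ` sched d R C t)"
  using sched_CT by blast

lemma Zbar_tr: "Zbar d (r, c) = tr (Xbar d (c, r))"
  by (auto simp: Zbar_def Xbar_def tr_def)

lemma boxes_swap: "b \<in> boxes d \<Longrightarrow> prod.swap b \<in> boxes d"
  by (cases b) (auto simp: boxes_def)

lemma red_strip_ctc: "blue_strip d C S \<Longrightarrow> red_strip d (ctc C) (prod.swap ` S)"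
proof -
  assume "blue_strip d C S"
  then obtain r a b c where st: "a \<le> c" "c \<le> b" "b < d - 1" "r < d - 1" "\<not> C (r, c)"
      "S = {(r, k) | k. a \<le> k \<and> k \<le> b}" unfolding blue_strip_def by blast
  have "prod.swap ` S = {(k, r) | k. a \<le> k \<and> k \<le> b}" using st(6) by auto
  moreover have "ctc C (c, r)" using st(5) by (simp add: ctc_def)
  ultimately show ?thesis unfolding red_strip_def using st by blast
qed

lemma blue_strip_ctc: "red_strip d C S \<Longrightarrow> blue_strip d (ctc C) (prod.swap ` S)"
proof -
  assume "red_strip d C S"
  then obtain c a b r where st: "a \<le> r" "r \<le> b" "b < d - 1" "c < d - 1" "C (r, c)"
      "S = {(k, c) | k. a \<le> k \<and> k \<le> b}" unfolding red_strip_def by blast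
  have "prod.swap ` S = {(c, k) | k. a \<le> k \<and> k \<le> b}" using st(6) by auto
  moreover have "\<not> ctc C (c, r)" using st(5) by (simp add: ctc_def)
  ultimately show ?thesis unfolding blue_strip_def using st by blast
qed

lemma follows_ctc:
  assumes "follows d C C'"
  shows "follows d (ctc C) (ctc C')"
proof -
  obtain Rs Bs where rs: "\<forall>S\<in>Rs. red_strip d C S" and bs: "\<forall>S\<in>Bs. blue_strip d C S"
    and dj: "\<Union>Rs \<inter> \<Union>Bs = {}"
    and upd: "\<forall>b\<in>boxes d. C' b = (if b \<in> \<Union>Rs then True else if b \<in> \<Union>Bs then False else C b)"
    using assms unfolding follows_def by blast
  define Rs' where "Rs' = (\<lambda>S. prod.swap ` S) ` Bs"
  define Bs' where "Bs' = (\<lambda>S. prod.swap ` S) ` Rs"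
  have u1: "b \<in> \<Union>Rs' \<longleftrightarrow> prod.swap b \<in> \<Union>Bs" for b
    unfolding Rs'_def by (cases b) force
  have u2: "b \<in> \<Union>Bs' \<longleftrightarrow> prod.swap b \<in> \<Union>Rs" for b
    unfolding Bs'_def by (cases b) force
  show ?thesis unfolding follows_def
  proof (rule exI[of _ Rs'], rule exI[of _ Bs'], intro conjI ballI)
    fix S assume "S \<in> Rs'" then show "red_strip d (ctc C) S" unfolding Rs'_def using bs red_strip_ctc by blast
  next
    fix S assume "S \<in> Bs'" then show "blue_strip d (ctc C) S" unfolding Bs'_def using rs blue_strip_ctc by blast
  next
    show "\<Union>Rs' \<inter> \<Union>Bs' = {}" using dj u1 u2 by blast
  next
    fix b assume b: "b \<in> boxes d"
    have "C' (prod.swap b) = (if prod.swap b \<in> \<Union>Rs then True else if prod.swap b \<in> \<Union>Bs then False else C (prod.swap b))"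
      using upd boxes_swap[OF b] by blast
    then show "ctc C' b = (if b \<in> \<Union>Rs' then True else if b \<in> \<Union>Bs' then False else ctc C b)"
      unfolding ctc_def u1 u2 using dj by auto
  qed
qed

lemma solution_CT:
  assumes sol: "solution d R C"
  shows "solution d R (CT C)"
proof -
  have s: "0 < R" "\<forall>j. Suc j < R \<longrightarrow> follows d (C j) (C (Suc j))" "follows d (C (R - 1)) (C 0)"
     "\<forall>c < d - 1. \<exists>j < R. \<forall>r < d - 1. C j (r, c)"
     "\<forall>r < d - 1. \<exists>j < R. \<forall>c < d - 1. \<not> C j (r, c)"
     "\<forall>j < R. (\<forall>c < d - 1. \<exists>r < d - 1. C j (r, c)) \<and> (\<forall>r < d - 1. \<exists>c < d - 1. \<not> C j (r, c))"
    using sol unfolding solution_def by blast+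
  show ?thesis unfolding solution_def CT_def
  proof (intro conjI allI impI)
    show "0 < R" by (rule s(1))
  next
    fix j assume "Suc j < R" then show "follows d (ctc (C j)) (ctc (C (Suc j)))" using s(2) follows_ctc by blast
  next
    show "follows d (ctc (C (R - 1))) (ctc (C 0))" using s(3) follows_ctc by blast
  next
    fix c assume "c < d - 1" then show "\<exists>j<R. \<forall>r<d - 1. ctc (C j) (r, c)" using s(5) by (simp add: ctc_def)
  next
    fix r assume "r < d - 1" then show "\<exists>j<R. \<forall>c<d - 1. \<not> ctc (C j) (r, c)" using s(4) by (simp add: ctc_def)
  next
    fix j c assume "j < R" "c < d - 1" then show "\<exists>r<d - 1. ctc (C j) (r, c)" using s(6) by (simp add: ctc_def)
  next
    fix j r assume "j < R" "r < d - 1" then show "\<exists>c<d - 1. \<not> ctc (C j) (r, c)" using s(6) by (simp add: ctc_def)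
  qed
qed

lemma card_trE_image: "card (trE ` A) = card A"
  using inj_trE by (simp add: card_image inj_on_subset)

lemma eprod_trE: "eprod (trE ` E) = tr (eprod E)"
proof -
  have f: "{e \<in> trE ` E. q \<in> fst (snd e)} = trE ` {e \<in> E. prod.swap q \<in> snd (snd e)}" for q
    by (force simp: trE_def tr_def)
  have s: "{e \<in> trE ` E. q \<in> snd (snd e)} = trE ` {e \<in> E. prod.swap q \<in> fst (snd e)}" for q
    by (force simp: trE_def tr_def)
  have sw: "{q. P (prod.swap q)} = prod.swap ` {q. P q}" for P :: "qubit \<Rightarrow> bool"
    by force
  have "fst (eprod (trE ` E)) = {q. odd (card {e \<in> E. prod.swap q \<in> snd (snd e)})}"
    unfolding eprod_def by (simp add: f card_trE_image)
  also have "\<dots> = prod.swap ` {q. odd (card {e \<in> E. q \<in> snd (snd e)})}"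
    by (rule sw[of "\<lambda>q. odd (card {e \<in> E. q \<in> snd (snd e)})"])
  finally have 1: "fst (eprod (trE ` E)) = fst (tr (eprod E))" unfolding tr_def eprod_def by simp
  have "snd (eprod (trE ` E)) = {q. odd (card {e \<in> E. prod.swap q \<in> fst (snd e)})}"
    unfolding eprod_def by (simp add: s card_trE_image)
  also have "\<dots> = prod.swap ` {q. odd (card {e \<in> E. q \<in> fst (snd e)})}"
    by (rule sw[of "\<lambda>q. odd (card {e \<in> E. q \<in> fst (snd e)})"])
  finally have 2: "snd (eprod (trE ` E)) = snd (tr (eprod E))" unfolding tr_def eprod_def by simp
  show ?thesis using 1 2 by (simp add: prod_eq_iff)
qed

lemma filter_trE: "{e \<in> trE ` D. P (fst e)} = trE ` {e \<in> D. P (fst e)}"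
  by (force simp: trE_def)

lemma fst_trE_image[simp]: "fst ` trE ` D = fst ` D"
  by (force simp: trE_def)

lemma detector_tr:
  assumes det: "detector M D"
  shows "detector (\<lambda>t. tr ` M t) (trE ` D)"
proof -
  have fin: "finite D" and ne: "D \<noteq> {}" and mem: "\<forall>(t, p)\<in>D. p \<in> M t"
    and cm: "\<forall>t \<in> fst ` D. \<forall>t'. t < t' \<and> (\<forall>s\<in>fst ` D. t < s \<longrightarrow> t' \<le> s) \<and> (\<exists>s\<in>fst ` D. t < s)
            \<longrightarrow> (\<forall>q\<in>M t'. commute (eprod {e\<in>D. fst e \<le> t}) q)"
    and pr: "eprod D = pid"
    using det unfolding detector_def by blast+
  show ?thesis unfolding detector_def
  proof (intro conjI ballI allI impI)
    show "finite (trE ` D)" using fin by simp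
    show "trE ` D \<noteq> {}" using ne by simp
  next
    fix x assume "x \<in> trE ` D"
    then obtain t p where "x = (t, tr p)" "(t, p) \<in> D" by (force simp: trE_def)
    then show "case x of (t, p) \<Rightarrow> p \<in> tr ` M t" using mem by auto
  next
    fix t t' q assume t: "t \<in> fst ` trE ` D"
      and c: "t < t' \<and> (\<forall>s\<in>fst ` trE ` D. t < s \<longrightarrow> t' \<le> s) \<and> (\<exists>s\<in>fst ` trE ` D. t < s)"
      and q: "q \<in> tr ` M t'"
    obtain q0 where q0: "q = tr q0" "q0 \<in> M t'" using q by blast
    have t0: "t \<in> fst ` D" using t by simp
    have c0: "t < t' \<and> (\<forall>s\<in>fst ` D. t < s \<longrightarrow> t' \<le> s) \<and> (\<exists>s\<in>fst ` D. t < s)" using c by simp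
    have "commute (eprod {e\<in>D. fst e \<le> t}) q0" using cm[rule_format, OF t0 c0] q0(2) by blast
    then show "commute (eprod {e \<in> trE ` D. fst e \<le> t}) q"
      using filter_trE[where P="\<lambda>s. s \<le> t" and D=D] by (simp add: eprod_trE q0(1) commute_tr)
  next
    show "eprod (trE ` D) = pid" using pr by (simp add: eprod_trE)
  qed
qed

lemma det_weight_trE: "det_weight (trE ` E) = det_weight E"
proof -
  have "det_weight (trE ` E) = (\<Sum>e\<in>E. pweight (snd (trE e)))"
    unfolding det_weight_def using inj_trE by (simp add: sum.reindex inj_on_subset)
  also have "\<dots> = det_weight E" unfolding det_weight_def trE_def by (simp add: pweight_tr)
  finally show ?thesis .
qed

lemma symd_family_trE: "symd_family ((\<lambda>D. trE ` D) ` F) = trE ` symd_family F"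
proof (rule set_eqI)
  fix e
  have inj: "inj_on (\<lambda>D. trE ` D) X" for X
    using inj_trE by (simp add: inj_on_def inj_image_eq_iff)
  have "{D \<in> (\<lambda>D. trE ` D) ` F. e \<in> D} = (\<lambda>D. trE ` D) ` {D \<in> F. trE e \<in> D}"
  proof (intro set_eqI iffI)
    fix X assume "X \<in> {D \<in> (\<lambda>D. trE ` D) ` F. e \<in> D}"
    then obtain D where "X = trE ` D" "D \<in> F" "e \<in> trE ` D" by blast
    then have "trE e \<in> D" by force
    then show "X \<in> (\<lambda>D. trE ` D) ` {D \<in> F. trE e \<in> D}" using \<open>X = trE ` D\<close> \<open>D \<in> F\<close> by blast
  next
    fix X assume "X \<in> (\<lambda>D. trE ` D) ` {D \<in> F. trE e \<in> D}"
    then obtain D where "X = trE ` D" "D \<in> F" "trE e \<in> D" by blast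
    then have "e \<in> trE ` D" by (metis image_eqI trE_trE)
    then show "X \<in> {D \<in> (\<lambda>D. trE ` D) ` F. e \<in> D}" using \<open>X = trE ` D\<close> \<open>D \<in> F\<close> by blast
  qed
  then have "card {D \<in> (\<lambda>D. trE ` D) ` F. e \<in> D} = card {D \<in> F. trE e \<in> D}"
    using inj by (simp add: card_image)
  moreover have "e \<in> trE ` symd_family F \<longleftrightarrow> trE e \<in> symd_family F"
    by (metis image_eqI imageE trE_trE)
  ultimately show "e \<in> symd_family ((\<lambda>D. trE ` D) ` F) \<longleftrightarrow> e \<in> trE ` symd_family F"
    unfolding symd_family_def by simp
qed

lemma goodD_tr:
  assumes "goodD M w E"
  shows "goodD (\<lambda>t. tr ` M t) w (trE ` E)"
proof -
  obtain F where F: "finite F" "\<forall>D'\<in>F. detector M D' \<and> det_weight D' \<le> w" "E = symd_family F"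
    using assms unfolding goodD_def by blast
  show ?thesis unfolding goodD_def
  proof (intro exI[of _ "(\<lambda>D. trE ` D) ` F"] conjI)
    show "finite ((\<lambda>D. trE ` D) ` F)" using F(1) by simp
    show "\<forall>D'\<in>(\<lambda>D. trE ` D) ` F. detector (\<lambda>t. tr ` M t) D' \<and> det_weight D' \<le> w"
      using F(2) detector_tr det_weight_trE by auto
    show "trE ` E = symd_family ((\<lambda>D. trE ` D) ` F)" using F(3) symd_family_trE by simp
  qed
qed

definition Zpart :: "event set \<Rightarrow> event set" where
  "Zpart D = {e \<in> D. \<exists>r j. snd e = ZZ r j}"

lemma Zpart_trE: "trE ` Xpart (trE ` D) = Zpart D"
proof (intro set_eqI iffI)
  fix e assume "e \<in> trE ` Xpart (trE ` D)"
  then obtain e0 k c where "e = trE (trE e0)" "e0 \<in> D" "tr (snd e0) = XX k c"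
    unfolding Xpart_def by (force simp: trE_def)
  then have "snd e0 = tr (XX k c)" by (metis tr_tr)
  then have "e \<in> D" "snd e = ZZ c k" using \<open>e = trE (trE e0)\<close> \<open>e0 \<in> D\<close> by simp_all
  then show "e \<in> Zpart D" unfolding Zpart_def by blast
next
  fix e assume "e \<in> Zpart D"
  then obtain r j where e: "e \<in> D" "snd e = ZZ r j" unfolding Zpart_def by blast
  have "trE e \<in> trE ` D" using e(1) by blast
  moreover have "snd (trE e) = XX j r" using e(2) by (simp add: trE_def)
  ultimately have "trE e \<in> Xpart (trE ` D)" unfolding Xpart_def by blast
  then show "e \<in> trE ` Xpart (trE ` D)" by (metis image_eqI trE_trE)
qed

lemma det_split:
  assumes det: "detector (sched d R C) D"
  shows "D = symd (Xpart D) (Zpart D)"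
proof -
  have "evXZ D" by (rule det_evXZ[OF det])
  then show ?thesis unfolding evXZ_def Xpart_def Zpart_def by auto
qed

lemma tr_tr_image: "(\<lambda>t. tr ` tr ` M t) = M"
  by (simp add: image_image)

theorem theorem2:
  "\<exists>c::nat. \<forall>d R C. 2 \<le> d \<and> solution d R C \<longrightarrow>
     (\<exists>M. schedule d R M
        \<and> (\<exists>t0 k. \<forall>t\<ge>t0.
              isg M (t + R) = isg M t
            \<and> (\<forall>b\<in>boxes d.
                 (C ((t + k) mod R) b \<longrightarrow> Xbar d b \<in> isg M (Suc t))
               \<and> (\<not> C ((t + k) mod R) b \<longrightarrow> Zbar d b \<in> isg M (Suc t))))
        \<and> (\<forall>D. detector M D \<longrightarrow>
              (\<exists>F. finite F \<and> (\<forall>D'\<in>F. detector M D' \<and> det_weight D' \<le> c * R * d)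
                   \<and> D = symd_family F)))"
proof (intro exI[of _ 4] allI impI)
  fix d R C assume a: "2 \<le> d \<and> solution d R C"
  then have d: "2 \<le> d" and sol: "solution d R C" by auto
  have solT: "solution d R (CT C)" by (rule solution_CT[OF sol])
  define M where "M = sched d R C"
  have MT: "sched d R (CT C) = (\<lambda>t. tr ` M t)" unfolding M_def by (rule sched_CT_fun)
  show "\<exists>M. schedule d R M
        \<and> (\<exists>t0 k. \<forall>t\<ge>t0.
              isg M (t + R) = isg M t
            \<and> (\<forall>b\<in>boxes d.
                 (C ((t + k) mod R) b \<longrightarrow> Xbar d b \<in> isg M (Suc t))
               \<and> (\<not> C ((t + k) mod R) b \<longrightarrow> Zbar d b \<in> isg M (Suc t))))
        \<and> (\<forall>D. detector M D \<longrightarrow>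
              (\<exists>F. finite F \<and> (\<forall>D'\<in>F. detector M D' \<and> det_weight D' \<le> 4 * R * d)
                   \<and> D = symd_family F))"
  proof (intro exI[of _ M] conjI)
    show sM: "schedule d R M" unfolding M_def by (rule sched_schedule)
    obtain t1 where t1: "\<forall>t\<ge>t1. isg M (t + R) = isg M t" using isg_eventually_periodic[OF sM] by blast
    show "\<exists>t0 k. \<forall>t\<ge>t0.
              isg M (t + R) = isg M t
            \<and> (\<forall>b\<in>boxes d.
                 (C ((t + k) mod R) b \<longrightarrow> Xbar d b \<in> isg M (Suc t))
               \<and> (\<not> C ((t + k) mod R) b \<longrightarrow> Zbar d b \<in> isg M (Suc t)))"
    proof (rule exI[of _ "max t1 R"], rule exI[of _ 0], intro allI impI)
      fix t assume t: "max t1 R \<le> t"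
      have tR: "R \<le> t" using t by simp
      have X: "Xbar d b \<in> isg M (Suc t)" if b: "b \<in> boxes d" "C ((t + 0) mod R) b" for b
      proof -
        obtain r c where rc: "b = (r, c)" "r < d - 1" "c < d - 1" using b by (auto simp: boxes_def)
        show ?thesis
          using goodX_eventually[OF sol d rc(3) tR] rc b(2) unfolding goodX_def M_def by simp
      qed
      have Z: "Zbar d b \<in> isg M (Suc t)" if b: "b \<in> boxes d" "\<not> C ((t + 0) mod R) b" for b
      proof -
        obtain r c where rc: "b = (r, c)" "r < d - 1" "c < d - 1" using b by (auto simp: boxes_def)
        have "CT C (t mod R) (c, r)" using rc b(2) by (simp add: CT_def ctc_def)
        then have "Xbar d (c, r) \<in> isg (sched d R (CT C)) (Suc t)"
          using goodX_eventually[OF solT d rc(2) tR] rc unfolding goodX_def by simp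
        then have "Xbar d (c, r) \<in> tr ` isg M (Suc t)" unfolding MT isg_tr .
        then obtain y where y: "y \<in> isg M (Suc t)" "Xbar d (c, r) = tr y" by blast
        then have "y = tr (Xbar d (c, r))" by simp
        then show "Zbar d b \<in> isg M (Suc t)" using y(1) rc by (simp add: Zbar_tr)
      qed
      show "isg M (t + R) = isg M t
            \<and> (\<forall>b\<in>boxes d.
                 (C ((t + 0) mod R) b \<longrightarrow> Xbar d b \<in> isg M (Suc t))
               \<and> (\<not> C ((t + 0) mod R) b \<longrightarrow> Zbar d b \<in> isg M (Suc t)))"
        using t1 t X Z by simp
    qed
    show "\<forall>D. detector M D \<longrightarrow>
              (\<exists>F. finite F \<and> (\<forall>D'\<in>F. detector M D' \<and> det_weight D' \<le> 4 * R * d)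
                   \<and> D = symd_family F)"
    proof (intro allI impI)
      fix D assume det: "detector M D"
      have gX: "goodD M (4 * R * d) (Xpart D)" using Xpart_good[OF sol] det unfolding M_def by blast
      have detT: "detector (sched d R (CT C)) (trE ` D)" unfolding MT by (rule detector_tr[OF det])
      have "goodD (sched d R (CT C)) (4 * R * d) (Xpart (trE ` D))" by (rule Xpart_good[OF solT detT])
      then have "goodD (\<lambda>t. tr ` sched d R (CT C) t) (4 * R * d) (trE ` Xpart (trE ` D))" by (rule goodD_tr)
      then have gZ: "goodD M (4 * R * d) (Zpart D)" unfolding MT Zpart_trE tr_tr_image .
      have "goodD M (4 * R * d) (symd (Xpart D) (Zpart D))" by (rule goodD_symd[OF gX gZ])
      moreover have "D = symd (Xpart D) (Zpart D)" using det_split det unfolding M_def by blast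
      ultimately show "\<exists>F. finite F \<and> (\<forall>D'\<in>F. detector M D' \<and> det_weight D' \<le> 4 * R * d) \<and> D = symd_family F"
        unfolding goodD_def by simp
    qed
  qed
qed

end
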